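(* Let $\vec{p}=(p_1,\dots,p_n)$ with $1<\vec{p}<\infty$, let $-\frac{1}{n}\sum_{i=1}^n\frac{1}{p_i}<\lambda<0$, and let $\vec{p}'=(p_1',\dots,p_n')$ with $p_i'=p_i/(p_i-1)$. Then (a) $\mathcal{H}$ is bounded from $\mathcal{B}^{\vec{p},\lambda}(\mathbb{R}^n)$ to $\mathcal{B}^{\vec{p},\lambda}(\mathbb{R}^n)$; (b) $\mathcal{H}^*$ is bounded from $\mathcal{B}^{\vec{p}',\lambda}(\mathbb{R}^n)$ to $\mathcal{B}^{\vec{p}',\lambda}(\mathbb{R}^n)$.
   Context: For an exponent vector $\vec{p}$ with $0<p_i<\infty$, the mixed Lebesgue norm is $\|f\|_{L^{\vec{p}}}=\Big(\int_{\mathbb{R}}\cdots\Big(\int_{\mathbb{R}}\Big(\int_{\mathbb{R}}|f(x_1,\dots,x_n)|^{p_1}dx_1\Big)^{p_2/p_1}dx_2\Big)^{p_3/p_2}\cdots dx_n\Big)^{1/p_n}$. For $\lambda\in\mathbb{R}$, the mixed $\lambda$-central Morrey space $\mathcal{B}^{\vec{p},\lambda}(\mathbb{R}^n)$ consists of measurable $f$ with $\|f\|_{\mathcal{B}^{\vec{p},\lambda}}=\sup_{r>0}\frac{\|f\chi_{B(0,r)}\|_{L^{\vec p}}}{|B(0,r)|^{\lambda}\|\chi_{B(0,r)}\|_{L^{\vec p}}}<\infty$, $\chi_B$ being the indicator of $B$. $\mathcal{H}f(x)=|x|^{-n}\int_{|t|<|x|}f(t)\,dt$ and $\mathcal{H}^*f(x)=\int_{|t|\ge|x|}f(t)|t|^{-n}\,dt$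 for $x\ne0$. Boundedness from $X$ to $Y$ means $\|Tf\|_Y\le C\|f\|_X$ for all $f\in X$. *)

theory Defs
  imports "HOL-Analysis.Analysis"
begin

text \<open>Points of R^n are represented as extensional functions nat => real on the index
set {..<n}; coordinate x_(i+1) of the paper is x i here.\<close>

definition Rn :: "nat \<Rightarrow> (nat \<Rightarrow> real) measure" where
  "Rn n = PiM {..<n} (\<lambda>_. lborel)"

definition enorm :: "nat \<Rightarrow> (nat \<Rightarrow> real) \<Rightarrow> real" where
  "enorm n x = sqrt (\<Sum>i<n. (x i)\<^sup>2)"

definition ball0 :: "nat \<Rightarrow> real \<Rightarrow> (nat \<Rightarrow> real) set" where
  "ball0 n r = {x \<in> space (Rn n). enorm n x < r}"

definition epowr :: "ennreal \<Rightarrow> real \<Rightarrow> ennreal" where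
  "epowr x a = (if x = \<infinity> then \<infinity> else ennreal (enn2real x powr a))"

text \<open>Iterated partial mixed norm: integrates out coordinates 0,...,k-1, innermost
coordinate 0 with exponent p 0, then coordinate 1 with exponent p 1, etc.\<close>
fun mixpart :: "(nat \<Rightarrow> real) \<Rightarrow> nat \<Rightarrow> ((nat \<Rightarrow> real) \<Rightarrow> real) \<Rightarrow> (nat \<Rightarrow> real) \<Rightarrow> ennreal" where
  "mixpart p 0 f x = ennreal \<bar>f x\<bar>"
| "mixpart p (Suc k) f x =
     epowr (\<integral>\<^sup>+ t. epowr (mixpart p k f (x(k := t))) (p k) \<partial>lborel) (1 / p k)"

definition mixnorm :: "nat \<Rightarrow> (nat \<Rightarrow> real) \<Rightarrow> ((nat \<Rightarrow> real) \<Rightarrow> real) \<Rightarrow> ennreal" where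
  "mixnorm n p f = mixpart p n f (\<lambda>_. undefined)"

definition indic_ball :: "nat \<Rightarrow> real \<Rightarrow> (nat \<Rightarrow> real) \<Rightarrow> real" where
  "indic_ball n r = indicator (ball0 n r)"

definition morrey_norm :: "nat \<Rightarrow> (nat \<Rightarrow> real) \<Rightarrow> real \<Rightarrow> ((nat \<Rightarrow> real) \<Rightarrow> real) \<Rightarrow> ennreal" where
  "morrey_norm n p lam f =
     (SUP r\<in>{0<..}. mixnorm n p (\<lambda>x. f x * indic_ball n r x)
        * ennreal (1 / (measure (Rn n) (ball0 n r) powr lam * enn2real (mixnorm n p (indic_ball n r)))))"

definition morrey_space :: "nat \<Rightarrow> (nat \<Rightarrow> real) \<Rightarrow> real \<Rightarrow> ((nat \<Rightarrow> real) \<Rightarrow> real) set" where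
  "morrey_space n p lam = {f. f \<in> borel_measurable (Rn n) \<and> morrey_norm n p lam f < \<infinity>}"

text \<open>Hardy operator and its adjoint (value at x = 0 is 0, irrelevant: a null set).\<close>
definition hardy :: "nat \<Rightarrow> ((nat \<Rightarrow> real) \<Rightarrow> real) \<Rightarrow> (nat \<Rightarrow> real) \<Rightarrow> real" where
  "hardy n f x = enorm n x powr (- real n) *
     (LINT t : {t \<in> space (Rn n). enorm n t < enorm n x} | Rn n. f t)"

definition hardy_adj :: "nat \<Rightarrow> ((nat \<Rightarrow> real) \<Rightarrow> real) \<Rightarrow> (nat \<Rightarrow> real) \<Rightarrow> real" where
  "hardy_adj n f x =
     (LINT t : {t \<in> space (Rn n). enorm n x \<le> enorm n t} | Rn n. f t * enorm n t powr (- real n))"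

definition bounded_op ::
  "(((nat \<Rightarrow> real) \<Rightarrow> real) \<Rightarrow> (nat \<Rightarrow> real) \<Rightarrow> real) \<Rightarrow> ((nat \<Rightarrow> real) \<Rightarrow> real) set
   \<Rightarrow> (((nat \<Rightarrow> real) \<Rightarrow> real) \<Rightarrow> ennreal) \<Rightarrow> (((nat \<Rightarrow> real) \<Rightarrow> real) \<Rightarrow> ennreal) \<Rightarrow> bool" where
  "bounded_op T X normX normY \<longleftrightarrow> (\<exists>C::real. \<forall>f\<in>X. normY (T f) \<le> ennreal C * normX f)"

end

theory Submission
  imports Defs
begin
lemma epowr_0[simp]: "a > 0 \<Longrightarrow> epowr 0 a = 0"
  by (simp add: epowr_def)

lemma epowr_top[simp]: "epowr top a = top"
  by (simp add: epowr_def)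

lemma epowr_ennreal: "0 \<le> c \<Longrightarrow> epowr (ennreal c) a = ennreal (c powr a)"
  by (simp add: epowr_def)

lemma epowr_top_iff: "epowr x a = top \<longleftrightarrow> x = top"
  by (cases x) (auto simp: epowr_def)

lemma epowr_mono: assumes "x \<le> y" "a > 0" shows "epowr x a \<le> epowr y a"
proof (cases "y = top")
  case True then show ?thesis by simp
next
  case False
  then have "x \<noteq> top" using assms top.extremum_uniqueI by blast
  then obtain u v where uv: "x = ennreal u" "y = ennreal v" "u \<ge> 0" "v \<ge> 0"
    using False by (metis enn2real_nonneg ennreal_enn2real_if)
  then have "u \<le> v" using assms(1) by simp
  then have "u powr a \<le> v powr a" using uv assms by (simp add: powr_mono2)
  then show ?thesis using uv by (simp add: epowr_ennreal)
qed

lemma epowr_inv: assumes "a > 0" shows "epowr (epowr x a) (1/a) = x"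
proof (cases x)
  case (real r)
  then have "(r powr a) powr (1/a) = r" using assms by (simp add: powr_powr)
  then show ?thesis using real by (simp add: epowr_def)
qed (simp add: epowr_def)

lemma epowr_powr: assumes "a > 0" "b > 0" shows "epowr (epowr x a) b = epowr x (a*b)"
proof (cases x)
  case (real r)
  then show ?thesis by (simp add: epowr_def powr_powr)
qed (simp add: epowr_def)

lemma epowr_one[simp]: "epowr x 1 = x"
proof (cases x)
  case (real r)
  then show ?thesis by (cases "r = 0") (simp_all add: epowr_def)
qed (simp add: epowr_def)

lemma epowr_zero_iff: assumes "a > 0" shows "epowr x a = 0 \<longleftrightarrow> x = 0"
proof (cases x)
  case (real r)
  then show ?thesis using assms by (simp add: epowr_def)
qed (simp add: epowr_def)

lemma epowr_mult: assumes "a > 0" shows "epowr (x * y) a = epowr x a * epowr y a"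
proof (cases "x = 0 \<or> y = 0")
  case True then show ?thesis using assms by auto
next
  case False
  show ?thesis
  proof (cases "x = top \<or> y = top")
    case True
    have "x * y = top" using True False by (auto simp: ennreal_mult_eq_top_iff)
    moreover have "epowr x a \<noteq> 0" "epowr y a \<noteq> 0" using False epowr_zero_iff[OF assms] by auto
    moreover have "epowr x a = top \<or> epowr y a = top" using True by (auto simp: epowr_top_iff)
    ultimately have "epowr x a * epowr y a = top" by (auto simp: ennreal_mult_eq_top_iff)
    then show ?thesis using \<open>x * y = top\<close> by simp
  next
    case F2: False
    then obtain u v where "x = ennreal u" "y = ennreal v" "u \<ge> 0" "v \<ge> 0"
      by (metis enn2real_nonneg ennreal_enn2real_if)
    then show ?thesis by (simp add: epowr_ennreal ennreal_mult'[symmetric] powr_mult)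
  qed
qed

lemma epowr_cmult: assumes "a > 0" "c \<ge> 0" shows "epowr (ennreal c * y) a = ennreal (c powr a) * epowr y a"
  using epowr_mult[OF assms(1)] epowr_ennreal assms by simp

lemma epowr_add_exp: assumes "a > 0" "b > 0" shows "epowr x (a + b) = epowr x a * epowr x b"
proof (cases x)
  case (real r)
  then show ?thesis by (simp add: epowr_def powr_add ennreal_mult)
qed (simp add: epowr_def)

lemma measurable_epowr[measurable]: assumes [measurable]: "f \<in> borel_measurable M" shows "(\<lambda>x. epowr (f x) a) \<in> borel_measurable M"
  unfolding epowr_def by measurable

lemma epowr_le_iff: assumes "a > 0" shows "epowr x a \<le> epowr y a \<longleftrightarrow> x \<le> y"
proof
  assume "epowr x a \<le> epowr y a"
  then have "epowr (epowr x a) (1/a) \<le> epowr (epowr y a) (1/a)" by (rule epowr_mono) (use assms in auto)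
  then show "x \<le> y" using epowr_inv assms by simp
qed (rule epowr_mono[OF _ assms])

lemma young_pt:
  fixes u v al be p q :: real
  assumes "p > 1" "q > 1" "1/p + 1/q = 1" "u \<ge> 0" "v \<ge> 0" "al > 0" "be > 0"
  shows "u * v \<le> al * be * ((u powr p) / (p * al powr p) + (v powr q) / (q * be powr q))"
proof -
  have "(u/al) * (v/be) \<le> (u/al) powr p / p + (v/be) powr q / q"
    using Youngs_inequality[of p q "u/al" "v/be"] assms by simp
  also have "\<dots> = (u powr p) / (p * al powr p) + (v powr q) / (q * be powr q)"
    using assms by (simp add: powr_divide mult.commute)
  finally have "(u/al) * (v/be) \<le> (u powr p) / (p * al powr p) + (v powr q) / (q * be powr q)" .
  then have "al * be * ((u/al) * (v/be)) \<le> al * be * ((u powr p) / (p * al powr p) + (v powr q) / (q * be powr q))"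
    using assms by (intro mult_left_mono) auto
  then show ?thesis using assms by (simp add: field_simps)
qed

lemma young_ennreal:
  fixes x y :: ennreal and p q al be :: real
  assumes "p > 1" "q > 1" "1/p + 1/q = 1" "al > 0" "be > 0"
  shows "x * y \<le> ennreal (al * be / (p * al powr p)) * epowr x p + ennreal (al * be / (q * be powr q)) * epowr y q"
proof (cases "x = 0 \<or> y = 0")
  case True then show ?thesis by auto
next
  case False
  show ?thesis
  proof (cases "x = top \<or> y = top")
    case True
    have pos1: "ennreal (al * be / (p * al powr p)) > 0" "ennreal (al * be / (q * be powr q)) > 0"
      using assms by auto
    have ne: "al * be / (p * al powr p) \<noteq> 0" "al * be / (q * be powr q) \<noteq> 0" using assms by auto
    from True show ?thesis
    proof
      assume "x = top"
      then have "ennreal (al * be / (p * al powr p)) * epowr x p = top"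
        using pos1 ne by (simp add: ennreal_mult_eq_top_iff)
      then show ?thesis by simp
    next
      assume "y = top"
      then have "ennreal (al * be / (q * be powr q)) * epowr y q = top"
        using pos1 ne by (simp add: ennreal_mult_eq_top_iff)
      then show ?thesis by simp
    qed
  next
    case F2: False
    then obtain u v where uv: "x = ennreal u" "y = ennreal v" "u \<ge> 0" "v \<ge> 0"
      by (metis enn2real_nonneg ennreal_enn2real_if)
    have "u * v \<le> al * be * ((u powr p) / (p * al powr p) + (v powr q) / (q * be powr q))"
      by (rule young_pt) (use assms uv in auto)
    also have "\<dots> = (al * be / (p * al powr p)) * u powr p + (al * be / (q * be powr q)) * v powr q"
      by (simp add: field_simps)
    finally show ?thesis using uv assms
      by (simp add: epowr_ennreal ennreal_mult'[symmetric] ennreal_plus[symmetric] del: ennreal_plus)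
  qed
qed

lemma holder_nn:
  assumes pq: "p > 1" "q > 1" "1/p + 1/q = 1"
    and [measurable]: "f \<in> borel_measurable M" "g \<in> borel_measurable M"
  shows "(\<integral>\<^sup>+x. f x * g x \<partial>M) \<le> epowr (\<integral>\<^sup>+x. epowr (f x) p \<partial>M) (1/p) * epowr (\<integral>\<^sup>+x. epowr (g x) q \<partial>M) (1/q)"
proof -
  define A where "A = (\<integral>\<^sup>+x. epowr (f x) p \<partial>M)"
  define B where "B = (\<integral>\<^sup>+x. epowr (g x) q \<partial>M)"
  have p0: "p > 0" "q > 0" "1/p > 0" "1/q > 0" using pq by auto
  have main: "(\<integral>\<^sup>+x. f x * g x \<partial>M) \<le> epowr A (1/p) * epowr B (1/q)"
  proof (cases "A = 0 \<or> B = 0")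
    case True
    then show ?thesis
    proof
      assume "A = 0"
      then have "AE x in M. epowr (f x) p = 0" unfolding A_def by (simp add: nn_integral_0_iff_AE)
      then have "AE x in M. f x * g x = 0" by eventually_elim (use p0 epowr_zero_iff in auto)
      then have "(\<integral>\<^sup>+x. f x * g x \<partial>M) = 0" by (simp add: nn_integral_0_iff_AE)
      then show ?thesis by simp
    next
      assume "B = 0"
      then have "AE x in M. epowr (g x) q = 0" unfolding B_def by (simp add: nn_integral_0_iff_AE)
      then have "AE x in M. f x * g x = 0" by eventually_elim (use p0 epowr_zero_iff in auto)
      then have "(\<integral>\<^sup>+x. f x * g x \<partial>M) = 0" by (simp add: nn_integral_0_iff_AE)
      then show ?thesis by simp
    qed
  next
    case False
    then have nz: "epowr A (1/p) \<noteq> 0" "epowr B (1/q) \<noteq> 0" using epowr_zero_iff p0 by auto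
    show ?thesis
    proof (cases "A = top \<or> B = top")
      case True
      then have "epowr A (1/p) * epowr B (1/q) = top"
        using nz by (auto simp: ennreal_mult_eq_top_iff)
      then show ?thesis by simp
    next
      case F2: False
      define a where "a = enn2real A"
      define b where "b = enn2real B"
      have A: "A = ennreal a" "a > 0" using False F2 unfolding a_def
        by (simp_all add: ennreal_enn2real_if enn2real_positive_iff less_top[symmetric] zero_less_iff_neq_zero)
      have B: "B = ennreal b" "b > 0" using False F2 unfolding b_def
        by (simp_all add: ennreal_enn2real_if enn2real_positive_iff less_top[symmetric] zero_less_iff_neq_zero)
      define al where "al = a powr (1/p)"
      define be where "be = b powr (1/q)"
      have alp: "al powr p = a" "be powr q = b" using A B p0 unfolding al_def be_def by (simp_all add: powr_powr)
      have albe: "al > 0" "be > 0" using A B unfolding al_def be_def by auto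
      have "(\<integral>\<^sup>+x. f x * g x \<partial>M) \<le> (\<integral>\<^sup>+x. ennreal (al * be / (p * al powr p)) * epowr (f x) p + ennreal (al * be / (q * be powr q)) * epowr (g x) q \<partial>M)"
        by (intro nn_integral_mono young_ennreal) (use pq albe in auto)
      also have "\<dots> = ennreal (al * be / (p * a)) * A + ennreal (al * be / (q * b)) * B"
        unfolding A_def B_def alp by (simp add: nn_integral_add nn_integral_cmult)
      also have "\<dots> = ennreal (al * be / p) + ennreal (al * be / q)"
      proof -
        have "ennreal (al * be / (p * a)) * ennreal a = ennreal (al * be / (p * a) * a)"
          by (rule ennreal_mult''[symmetric]) (use A in simp)
        also have "al * be / (p * a) * a = al * be / p" using A pq by (simp add: field_simps)
        finally have 1: "ennreal (al * be / (p * a)) * A = ennreal (al * be / p)" using A by simp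
        have "ennreal (al * be / (q * b)) * ennreal b = ennreal (al * be / (q * b) * b)"
          by (rule ennreal_mult''[symmetric]) (use B in simp)
        also have "al * be / (q * b) * b = al * be / q" using B pq by (simp add: field_simps)
        finally have 2: "ennreal (al * be / (q * b)) * B = ennreal (al * be / q)" using B by simp
        show ?thesis using 1 2 by simp
      qed
      also have "\<dots> = ennreal (al * be / p + al * be / q)"
        using albe pq by (simp add: ennreal_plus)
      also have "al * be / p + al * be / q = al * be * (1/p + 1/q)" by (simp add: field_simps)
      also have "\<dots> = al * be" using pq by simp
      also have "ennreal (al * be) = epowr A (1/p) * epowr B (1/q)"
        using A B pq albe unfolding al_def be_def by (simp add: epowr_ennreal ennreal_mult'[symmetric])
      finally show ?thesis .
    qed
  qed
  then show ?thesis unfolding A_def B_def .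
qed

lemma minkowski_int:
  fixes H :: "real \<Rightarrow> 'b \<Rightarrow> ennreal" and \<mu> :: "'b measure"
  assumes q: "q > 1" and sf: "sigma_finite_measure \<mu>"
    and Hm[measurable]: "(\<lambda>(t,s). H t s) \<in> borel_measurable (lborel \<Otimes>\<^sub>M \<mu>)"
  shows "epowr (\<integral>\<^sup>+t. epowr (\<integral>\<^sup>+s. H t s \<partial>\<mu>) q \<partial>lborel) (1/q)
     \<le> (\<integral>\<^sup>+s. epowr (\<integral>\<^sup>+t. epowr (H t s) q \<partial>lborel) (1/q) \<partial>\<mu>)"
proof -
  interpret mu: sigma_finite_measure \<mu> by fact
  interpret P: pair_sigma_finite lborel \<mu>
    by (intro pair_sigma_finite.intro sigma_finite_lborel sf)
  have Hs[measurable]: "\<And>t. H t \<in> borel_measurable \<mu>"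
    using measurable_Pair2[OF Hm] by simp
  have Ht: "\<And>s. s \<in> space \<mu> \<Longrightarrow> (\<lambda>t. H t s) \<in> borel_measurable lborel"
    using measurable_Pair1[OF Hm] by simp
  define R where "R = (\<integral>\<^sup>+s. epowr (\<integral>\<^sup>+t. epowr (H t s) q \<partial>lborel) (1/q) \<partial>\<mu>)"
  define G where "G t = (\<integral>\<^sup>+s. H t s \<partial>\<mu>)" for t
  have Gm[measurable]: "G \<in> borel_measurable lborel" unfolding G_def by measurable
  have main: "epowr (\<integral>\<^sup>+t. epowr (G t) q \<partial>lborel) (1/q) \<le> R"
  proof (cases "R = top")
    case True then show ?thesis by simp
  next
    case False
    define q' where "q' = q/(q-1)"
    have q': "q' > 1" "1/q' + 1/q = 1" "(q-1)*q' = q" using q unfolding q'_def by (auto simp: field_simps)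
    define GN where "GN N t = min (G t) (of_nat N) * indicator {-real N..real N} t" for N :: nat and t
    have GNm[measurable]: "GN N \<in> borel_measurable lborel" for N unfolding GN_def by measurable
    have GN_le: "GN N t \<le> G t" for N t
      unfolding GN_def by (cases "t \<in> {-real N..real N}") auto
    have bound: "(\<integral>\<^sup>+t. epowr (GN N t) q \<partial>lborel) \<le> epowr R q" for N
    proof -
      define I where "I = (\<integral>\<^sup>+t. epowr (GN N t) q \<partial>lborel)"
      have "I \<le> (\<integral>\<^sup>+t. ennreal (real N powr q) * indicator {-real N..real N} t \<partial>lborel)"
        unfolding I_def
      proof (intro nn_integral_mono)
        fix t
        show "epowr (GN N t) q \<le> ennreal (real N powr q) * indicator {- real N..real N} t"
        proof (cases "t \<in> {-real N..real N}")
          case True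
          have "epowr (GN N t) q \<le> epowr (of_nat N) q"
            using True q by (intro epowr_mono) (auto simp: GN_def)
          also have "\<dots> = ennreal (real N powr q)" by (simp add: ennreal_of_nat_eq_real_of_nat epowr_ennreal)
          finally show ?thesis using True by simp
        qed (use q in \<open>simp add: GN_def\<close>)
      qed
      also have "\<dots> = ennreal (real N powr q) * ennreal (2 * real N)"
        by (simp add: nn_integral_cmult)
      also have "\<dots> < top" by (simp add: ennreal_mult_less_top)
      finally have Ifin: "I < top" .
      have "I \<le> (\<integral>\<^sup>+t. epowr (GN N t) (q-1) * G t \<partial>lborel)"
        unfolding I_def
      proof (intro nn_integral_mono)
        fix t
        have "epowr (GN N t) q = epowr (GN N t) ((q-1) + 1)" by simp
        also have "\<dots> = epowr (GN N t) (q-1) * GN N t" using q by (subst epowr_add_exp) auto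
        also have "\<dots> \<le> epowr (GN N t) (q-1) * G t" by (intro mult_left_mono GN_le) auto
        finally show "epowr (GN N t) q \<le> epowr (GN N t) (q-1) * G t" .
      qed
      also have "\<dots> = (\<integral>\<^sup>+t. (\<integral>\<^sup>+s. epowr (GN N t) (q-1) * H t s \<partial>\<mu>) \<partial>lborel)"
        unfolding G_def by (simp add: nn_integral_cmult)
      also have "\<dots> = (\<integral>\<^sup>+s. (\<integral>\<^sup>+t. epowr (GN N t) (q-1) * H t s \<partial>lborel) \<partial>\<mu>)"
        by (rule P.Fubini'[symmetric]) measurable
      also have "\<dots> \<le> (\<integral>\<^sup>+s. epowr (\<integral>\<^sup>+t. epowr (epowr (GN N t) (q-1)) q' \<partial>lborel) (1/q')
                  * epowr (\<integral>\<^sup>+t. epowr (H t s) q \<partial>lborel) (1/q) \<partial>\<mu>)"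
        by (intro nn_integral_mono holder_nn) (use q q' Ht in auto)
      also have "\<dots> = (\<integral>\<^sup>+s. epowr I (1/q') * epowr (\<integral>\<^sup>+t. epowr (H t s) q \<partial>lborel) (1/q) \<partial>\<mu>)"
        using q q' unfolding I_def by (simp add: epowr_powr)
      also have "\<dots> = epowr I (1/q') * R"
        unfolding R_def by (simp add: nn_integral_cmult)
      finally have IR: "I \<le> epowr I (1/q') * R" .
      show "I \<le> epowr R q" unfolding I_def[symmetric]
      proof (cases "I = 0")
        case True then show ?thesis by simp
      next
        case I0: False
        define i where "i = enn2real I"
        define r where "r = enn2real R"
        have Ii: "I = ennreal i" "i > 0" using Ifin I0 unfolding i_def
          by (simp_all add: ennreal_enn2real_if enn2real_positive_iff zero_less_iff_neq_zero)
        have Rr: "R = ennreal r" "r \<ge> 0" using False unfolding r_def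
          by (simp_all add: ennreal_enn2real_if)
        have "ennreal i \<le> ennreal (i powr (1/q')) * ennreal r"
          using IR Ii Rr by (simp add: epowr_ennreal)
        then have "i \<le> i powr (1/q') * r"
          using Ii Rr by (simp add: ennreal_mult'[symmetric])
        moreover have "i = i powr (1/q') * i powr (1/q)"
          using Ii q' by (simp add: powr_add[symmetric])
        ultimately have "i powr (1/q') * i powr (1/q) \<le> i powr (1/q') * r" by simp
        then have "i powr (1/q) \<le> r" using Ii by (simp add: mult_le_cancel_left_pos)
        then have "(i powr (1/q)) powr q \<le> r powr q" using q Ii by (intro powr_mono2) auto
        then have "i \<le> r powr q" using q Ii by (simp add: powr_powr)
        then show ?thesis using Ii Rr by (simp add: epowr_ennreal)
      qed
    qed
    have "(\<integral>\<^sup>+t. epowr (G t) q \<partial>lborel) \<le> (\<integral>\<^sup>+t. (SUP N. epowr (GN N t) q) \<partial>lborel)"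
    proof (intro nn_integral_mono)
      fix t
      show "epowr (G t) q \<le> (SUP N. epowr (GN N t) q)"
      proof (cases "G t = top")
        case True
        have "(SUP N. epowr (GN N t) q) = top"
        proof (rule ennreal_SUP_eq_top)
          fix n :: nat
          obtain m :: nat where m: "\<bar>t\<bar> \<le> real m" using real_arch_simple by blast
          define N where "N = max n m + 1"
          have "GN N t = of_nat N" using True m unfolding GN_def N_def by (auto simp: indicator_def)
          then have "epowr (GN N t) q = ennreal (real N powr q)"
            by (simp add: ennreal_of_nat_eq_real_of_nat epowr_ennreal)
          moreover have "real n \<le> real N powr q"
          proof -
            have "real n \<le> real N" unfolding N_def by simp
            also have "\<dots> = real N powr 1" unfolding N_def by simp
            also have "\<dots> \<le> real N powr q" using q unfolding N_def by (intro powr_mono) auto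
            finally show ?thesis .
          qed
          ultimately show "\<exists>i\<in>UNIV. of_nat n \<le> epowr (GN i t) q"
            by (metis UNIV_I ennreal_leI ennreal_of_nat_eq_real_of_nat)
        qed
        then show ?thesis by (metis top_greatest)
      next
        case False
        then obtain n :: nat where n: "G t < of_nat n" using ennreal_Ex_less_of_nat top.not_eq_extremum by blast
        obtain m :: nat where m: "\<bar>t\<bar> \<le> real m" using real_arch_simple by blast
        define N where "N = max n m"
        have "G t \<le> of_nat N" using n unfolding N_def
          by (metis less_imp_le max.cobounded1 of_nat_mono order_trans)
        then have "GN N t = G t" using m unfolding GN_def N_def by (auto simp: indicator_def min_def)
        then show ?thesis by (metis SUP_upper UNIV_I)
      qed
    qed
    also have "\<dots> = (SUP N. (\<integral>\<^sup>+t. epowr (GN N t) q \<partial>lborel))"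
    proof (rule nn_integral_monotone_convergence_SUP)
      show "incseq (\<lambda>N t. epowr (GN N t) q)"
      proof (intro incseq_SucI le_funI)
        fix N t
        have mm: "min (G t) (of_nat N) \<le> min (G t) (of_nat (Suc N))"
          by (rule min.mono) auto
        have "GN N t \<le> GN (Suc N) t"
          unfolding GN_def using mm by (auto simp: indicator_def)
        then show "epowr (GN N t) q \<le> epowr (GN (Suc N) t) q" using q by (intro epowr_mono) auto
      qed
    qed measurable
    also have "\<dots> \<le> epowr R q" by (intro SUP_least bound)
    finally have "(\<integral>\<^sup>+t. epowr (G t) q \<partial>lborel) \<le> epowr R q" .
    then have "epowr (\<integral>\<^sup>+t. epowr (G t) q \<partial>lborel) (1/q) \<le> epowr (epowr R q) (1/q)"
      using q by (intro epowr_mono) auto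
    then show ?thesis using q by (simp add: epowr_inv)
  qed
  then show ?thesis unfolding R_def G_def .
qed

fun mixE :: "(nat \<Rightarrow> real) \<Rightarrow> nat \<Rightarrow> ((nat \<Rightarrow> real) \<Rightarrow> ennreal) \<Rightarrow> (nat \<Rightarrow> real) \<Rightarrow> ennreal" where
  "mixE p 0 G x = G x"
| "mixE p (Suc k) G x = epowr (\<integral>\<^sup>+t. epowr (mixE p k G (x(k := t))) (p k) \<partial>lborel) (1 / p k)"

lemma mixpart_mixE: "mixpart p k f x = mixE p k (\<lambda>y. ennreal \<bar>f y\<bar>) x"
  by (induction k arbitrary: x) simp_all

lemma space_Rn: "space (Rn n) = {x. \<forall>i. n \<le> i \<longrightarrow> x i = undefined}"
  by (auto simp: Rn_def space_PiM PiE_def extensional_def)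

lemma upd_space: "x \<in> space (Rn n) \<Longrightarrow> k < n \<Longrightarrow> x(k := t) \<in> space (Rn n)"
  by (auto simp: space_Rn)

lemma undef_space: "(\<lambda>_. undefined) \<in> space (Rn n)"
  by (auto simp: space_Rn)

lemma mixE_local: "(\<And>i. k \<le> i \<Longrightarrow> x i = y i) \<Longrightarrow> mixE p k G x = mixE p k G y"
proof (induction k arbitrary: x y)
  case 0
  then have "x = y" by auto
  then show ?case by simp
next
  case (Suc k)
  have "mixE p k G (x(k := t)) = mixE p k G (y(k := t))" for t
    by (rule Suc.IH) (use Suc.prems in auto)
  then show ?case by simp
qed

lemma upd_meas[measurable]:
  assumes "k < n"
  shows "(\<lambda>(w::((nat \<Rightarrow> real) \<times> 'b) \<times> real). ((fst (fst w))(k := snd w), snd (fst w)))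
      \<in> measurable ((Rn n \<Otimes>\<^sub>M \<mu>) \<Otimes>\<^sub>M lborel) (Rn n \<Otimes>\<^sub>M \<mu>)"
proof -
  have "(\<lambda>(w::((nat \<Rightarrow> real) \<times> 'b) \<times> real). (fst (fst w))(k := snd w)) \<in> measurable ((Rn n \<Otimes>\<^sub>M \<mu>) \<Otimes>\<^sub>M lborel) (Rn n)"
    unfolding Rn_def
    by (rule measurable_fun_upd[where J="{..<n}"]) (use assms in auto)
  then show ?thesis by measurable
qed

lemma upd_meas2[measurable]:
  assumes "k < n" "x \<in> space (Rn n)"
  shows "(\<lambda>(w::real \<times> 'b). (x(k := fst w), snd w)) \<in> measurable (lborel \<Otimes>\<^sub>M \<mu>) (Rn n \<Otimes>\<^sub>M \<mu>)"
proof -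
  have "(\<lambda>(w::real \<times> 'b). x(k := fst w)) \<in> measurable (lborel \<Otimes>\<^sub>M \<mu>) (Rn n)"
    unfolding Rn_def
    by (rule measurable_fun_upd[where J="{..<n}"]) (use assms in \<open>auto simp: Rn_def\<close>)
  then show ?thesis by measurable
qed

lemma mixE_meas:
  assumes Fm: "(\<lambda>(y,s). F y s) \<in> borel_measurable (Rn n \<Otimes>\<^sub>M \<mu>)" and "k \<le> n"
  shows "(\<lambda>(y,s). mixE p k (\<lambda>z. F z s) y) \<in> borel_measurable (Rn n \<Otimes>\<^sub>M \<mu>)"
  using assms(2)
proof (induction k)
  case 0 then show ?case using Fm by simp
next
  case (Suc k)
  then have IH: "(\<lambda>(y,s). mixE p k (\<lambda>z. F z s) y) \<in> borel_measurable (Rn n \<Otimes>\<^sub>M \<mu>)" by simp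
  have kn: "k < n" using Suc by simp
  have "(\<lambda>(w::((nat \<Rightarrow> real) \<times> _) \<times> real). (\<lambda>(y,s). mixE p k (\<lambda>z. F z s) y) ((fst (fst w))(k := snd w), snd (fst w)))
      \<in> borel_measurable ((Rn n \<Otimes>\<^sub>M \<mu>) \<Otimes>\<^sub>M lborel)"
    by (rule measurable_compose[OF upd_meas[OF kn] IH])
  then have "(\<lambda>(ys, t). epowr (mixE p k (\<lambda>z. F z (snd ys)) ((fst ys)(k := t))) (p k)) \<in> borel_measurable ((Rn n \<Otimes>\<^sub>M \<mu>) \<Otimes>\<^sub>M lborel)"
    by (simp add: case_prod_beta')
  then have "(\<lambda>ys. \<integral>\<^sup>+t. epowr (mixE p k (\<lambda>z. F z (snd ys)) ((fst ys)(k := t))) (p k) \<partial>lborel) \<in> borel_measurable (Rn n \<Otimes>\<^sub>M \<mu>)"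
    by (rule lborel.borel_measurable_nn_integral)
  then have "(\<lambda>ys. epowr (\<integral>\<^sup>+t. epowr (mixE p k (\<lambda>z. F z (snd ys)) ((fst ys)(k := t))) (p k) \<partial>lborel) (1 / p k)) \<in> borel_measurable (Rn n \<Otimes>\<^sub>M \<mu>)"
    by measurable
  then show ?case by (simp add: case_prod_beta')
qed

lemma mixE_meas1:
  assumes Gm: "G \<in> borel_measurable (Rn n)" and "k \<le> n"
  shows "mixE p k G \<in> borel_measurable (Rn n)"
proof -
  have "(\<lambda>(y,s::real). G y) \<in> borel_measurable (Rn n \<Otimes>\<^sub>M lborel)" using Gm by measurable
  from mixE_meas[OF this assms(2), of p]
  have m: "(\<lambda>(y,s::real). mixE p k G y) \<in> borel_measurable (Rn n \<Otimes>\<^sub>M lborel)" by simp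
  have "(\<lambda>y. (y, 0::real)) \<in> measurable (Rn n) (Rn n \<Otimes>\<^sub>M lborel)" by measurable
  from measurable_compose[OF this m] show ?thesis by simp
qed

lemma mixE_mono_AE:
  assumes p: "\<forall>i<n. p i > 0" and "k \<le> n" and x: "x \<in> space (Rn n)"
    and xnz: "\<forall>i. k \<le> i \<and> i < n \<longrightarrow> x i \<noteq> 0"
    and le: "\<And>y. y \<in> space (Rn n) \<Longrightarrow> (\<forall>i<n. y i \<noteq> 0) \<Longrightarrow> G y \<le> G' y"
  shows "mixE p k G x \<le> mixE p k G' x"
  using assms(2) x xnz
proof (induction k arbitrary: x)
  case 0 then show ?case using le by simp
next
  case (Suc k)
  have kn: "k < n" using Suc by simp
  have "AE t in lborel. epowr (mixE p k G (x(k := t))) (p k) \<le> epowr (mixE p k G' (x(k := t))) (p k)"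
    using AE_lborel_singleton[of 0]
  proof eventually_elim
    case (elim t)
    have xs: "x(k := t) \<in> space (Rn n)" using upd_space[OF Suc.prems(2) kn] .
    have "mixE p k G (x(k := t)) \<le> mixE p k G' (x(k := t))"
      by (rule Suc.IH[OF _ xs]) (use Suc.prems kn elim in auto)
    then show ?case using p kn by (intro epowr_mono) auto
  qed
  then have "(\<integral>\<^sup>+t. epowr (mixE p k G (x(k := t))) (p k) \<partial>lborel) \<le> (\<integral>\<^sup>+t. epowr (mixE p k G' (x(k := t))) (p k) \<partial>lborel)"
    by (rule nn_integral_mono_AE)
  then show ?case using p kn by (simp add: epowr_mono)
qed

lemma mix_minkowski:
  assumes p: "\<forall>i<n. p i > 1" and sf: "sigma_finite_measure \<mu>"
    and Fm: "(\<lambda>(y,s). F y s) \<in> borel_measurable (Rn n \<Otimes>\<^sub>M \<mu>)"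
    and "k \<le> n" and "x \<in> space (Rn n)"
  shows "mixE p k (\<lambda>y. \<integral>\<^sup>+s. F y s \<partial>\<mu>) x \<le> (\<integral>\<^sup>+s. mixE p k (\<lambda>y. F y s) x \<partial>\<mu>)"
  using assms(4,5)
proof (induction k arbitrary: x)
  case 0 then show ?case by simp
next
  case (Suc k)
  have kn: "k < n" using Suc by simp
  have pk: "p k > 1" using p kn by simp
  have "mixE p (Suc k) (\<lambda>y. \<integral>\<^sup>+s. F y s \<partial>\<mu>) x
     \<le> epowr (\<integral>\<^sup>+t. epowr (\<integral>\<^sup>+s. mixE p k (\<lambda>y. F y s) (x(k := t)) \<partial>\<mu>) (p k) \<partial>lborel) (1 / p k)"
    unfolding mixE.simps
  proof (rule epowr_mono[OF nn_integral_mono])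
    fix t
    have xs: "x(k := t) \<in> space (Rn n)" using upd_space[OF Suc.prems(2) kn] .
    have "mixE p k (\<lambda>y. \<integral>\<^sup>+s. F y s \<partial>\<mu>) (x(k := t)) \<le> (\<integral>\<^sup>+s. mixE p k (\<lambda>y. F y s) (x(k := t)) \<partial>\<mu>)"
      by (rule Suc.IH[OF _ xs]) (use kn in simp)
    then show "epowr (mixE p k (\<lambda>y. \<integral>\<^sup>+s. F y s \<partial>\<mu>) (x(k := t))) (p k) \<le> epowr (\<integral>\<^sup>+s. mixE p k (\<lambda>y. F y s) (x(k := t)) \<partial>\<mu>) (p k)"
      using pk by (intro epowr_mono) auto
  qed (use pk in auto)
  also have "\<dots> \<le> (\<integral>\<^sup>+s. epowr (\<integral>\<^sup>+t. epowr (mixE p k (\<lambda>y. F y s) (x(k := t))) (p k) \<partial>lborel) (1 / p k) \<partial>\<mu>)"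
  proof (rule minkowski_int[OF pk sf])
    have m: "(\<lambda>(y,s). mixE p k (\<lambda>z. F z s) y) \<in> borel_measurable (Rn n \<Otimes>\<^sub>M \<mu>)"
      by (rule mixE_meas[OF Fm]) (use kn in simp)
    from measurable_compose[OF upd_meas2[OF kn Suc.prems(2)] m]
    show "(\<lambda>(t, s). mixE p k (\<lambda>y. F y s) (x(k := t))) \<in> borel_measurable (lborel \<Otimes>\<^sub>M \<mu>)"
      by (simp add: case_prod_beta')
  qed
  also have "\<dots> = (\<integral>\<^sup>+s. mixE p (Suc k) (\<lambda>y. F y s) x \<partial>\<mu>)" by simp
  finally show ?case .
qed

definition dil :: "nat \<Rightarrow> (nat \<Rightarrow> real) \<Rightarrow> (nat \<Rightarrow> real) \<Rightarrow> (nat \<Rightarrow> real)" where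
  "dil n c x = (\<lambda>i. if i < n then c i * x i else x i)"

lemma dil_space: "x \<in> space (Rn n) \<Longrightarrow> dil n c x \<in> space (Rn n)"
  by (auto simp: space_Rn dil_def)

lemma dil_upd: "k < n \<Longrightarrow> dil n c (x(k := t)) = (dil n c x)(k := c k * t)"
  by (auto simp: dil_def)

lemma dil_meas[measurable]: "dil n c \<in> measurable (Rn n) (Rn n)"
  unfolding Rn_def dil_def
  by (rule measurable_PiM_single') (auto simp: space_PiM PiE_def extensional_def)

lemma upd_meas_const[measurable]: "x \<in> space (Rn n) \<Longrightarrow> k < n \<Longrightarrow> (\<lambda>t. x(k := t)) \<in> measurable lborel (Rn n)"
  unfolding Rn_def
  by (rule measurable_fun_upd[where J="{..<n}"]) (auto simp: Rn_def)

lemma nn_integral_scale: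
  fixes c :: real assumes [measurable]: "f \<in> borel_measurable borel" and c: "c \<noteq> 0"
  shows "(\<integral>\<^sup>+t. f (c * t) \<partial>lborel) = ennreal (1 / \<bar>c\<bar>) * (\<integral>\<^sup>+x. f x \<partial>lborel)"
proof -
  have "(\<integral>\<^sup>+x. f x \<partial>lborel) = ennreal \<bar>c\<bar> * (\<integral>\<^sup>+t. f (0 + c * t) \<partial>lborel)"
    using nn_integral_real_affine[OF assms, of 0] by simp
  then have "ennreal (1 / \<bar>c\<bar>) * (\<integral>\<^sup>+x. f x \<partial>lborel) = ennreal (1 / \<bar>c\<bar>) * ennreal \<bar>c\<bar> * (\<integral>\<^sup>+t. f (c * t) \<partial>lborel)"
    by (simp add: mult.assoc)
  also have "ennreal (1 / \<bar>c\<bar>) * ennreal \<bar>c\<bar> = 1" using c by (simp add: ennreal_mult'[symmetric])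
  finally show ?thesis by simp
qed

definition dilK :: "(nat \<Rightarrow> real) \<Rightarrow> (nat \<Rightarrow> real) \<Rightarrow> nat \<Rightarrow> real" where
  "dilK p c k = (\<Prod>i<k. \<bar>c i\<bar> powr (- 1 / p i))"

lemma dilK_pos: "dilK p c k > 0" if "\<forall>i<k. c i \<noteq> 0"
  using that unfolding dilK_def by (intro prod_pos) auto

lemma mixE_dil:
  assumes p: "\<forall>i<n. p i > 0" and c: "\<forall>i<n. c i \<noteq> 0"
    and Gm[measurable]: "G \<in> borel_measurable (Rn n)" and "k \<le> n" and x: "x \<in> space (Rn n)"
  shows "mixE p k (\<lambda>y. G (dil n c y)) x = ennreal (dilK p c k) * mixE p k G (dil n c x)"
  using assms(4) x
proof (induction k arbitrary: x)
  case 0 then show ?case by (simp add: dilK_def)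
next
  case (Suc k)
  have kn: "k < n" using Suc by simp
  have pk: "p k > 0" "c k \<noteq> 0" using p c kn by auto
  have Kpos: "dilK p c k > 0" using c kn by (intro dilK_pos) auto
  define K where "K = dilK p c k"
  define \<phi> where "\<phi> u = epowr (mixE p k G ((dil n c x)(k := u))) (p k)" for u
  have mG: "mixE p k G \<in> borel_measurable (Rn n)" by (rule mixE_meas1[OF Gm]) (use kn in simp)
  have dx: "dil n c x \<in> space (Rn n)" using dil_space[OF Suc.prems(2)] .
  have \<phi>m: "\<phi> \<in> borel_measurable borel"
  proof -
    have "(\<lambda>u. mixE p k G ((dil n c x)(k := u))) \<in> borel_measurable lborel"
      by (rule measurable_compose[OF upd_meas_const[OF dx kn] mG])
    then show ?thesis unfolding \<phi>_def by simp
  qed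
  have "(\<integral>\<^sup>+t. epowr (mixE p k (\<lambda>y. G (dil n c y)) (x(k := t))) (p k) \<partial>lborel)
      = (\<integral>\<^sup>+t. ennreal (K powr p k) * \<phi> (c k * t) \<partial>lborel)"
  proof (rule nn_integral_cong)
    fix t
    have xs: "x(k := t) \<in> space (Rn n)" using upd_space[OF Suc.prems(2) kn] .
    have "mixE p k (\<lambda>y. G (dil n c y)) (x(k := t)) = ennreal K * mixE p k G (dil n c (x(k := t)))"
      unfolding K_def by (rule Suc.IH[OF _ xs]) (use kn in simp)
    then show "epowr (mixE p k (\<lambda>y. G (dil n c y)) (x(k := t))) (p k) = ennreal (K powr p k) * \<phi> (c k * t)"
      unfolding \<phi>_def using pk Kpos K_def by (simp add: epowr_cmult dil_upd[OF kn])
  qed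
  also have "\<dots> = ennreal (K powr p k) * (ennreal (1 / \<bar>c k\<bar>) * (\<integral>\<^sup>+u. \<phi> u \<partial>lborel))"
    using \<phi>m pk by (simp add: nn_integral_cmult nn_integral_scale)
  also have "\<dots> = ennreal (K powr p k / \<bar>c k\<bar>) * (\<integral>\<^sup>+u. \<phi> u \<partial>lborel)"
    by (simp add: mult.assoc[symmetric] ennreal_mult'[symmetric])
  finally have eq: "(\<integral>\<^sup>+t. epowr (mixE p k (\<lambda>y. G (dil n c y)) (x(k := t))) (p k) \<partial>lborel)
      = ennreal (K powr p k / \<bar>c k\<bar>) * (\<integral>\<^sup>+u. \<phi> u \<partial>lborel)" .
  have K0: "K > 0" using Kpos K_def by simp
  have "(K powr p k / \<bar>c k\<bar>) powr (1 / p k) = (K powr p k) powr (1 / p k) / \<bar>c k\<bar> powr (1 / p k)"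
    using K0 by (simp add: powr_divide)
  also have "(K powr p k) powr (1 / p k) = K" using K0 pk by (simp add: powr_powr)
  also have "K / \<bar>c k\<bar> powr (1 / p k) = K * \<bar>c k\<bar> powr (- 1 / p k)"
    by (simp add: powr_minus_divide divide_inverse powr_minus)
  also have "\<dots> = dilK p c (Suc k)" unfolding K_def dilK_def by simp
  finally have eK: "(K powr p k / \<bar>c k\<bar>) powr (1 / p k) = dilK p c (Suc k)" .
  show ?case
    unfolding mixE.simps eq using pk Kpos
    by (simp add: epowr_cmult eK \<phi>_def[abs_def])
qed

lemma merge_meas:
  assumes "k \<le> n" "x \<in> space (Rn n)"
  shows "(\<lambda>y. (\<lambda>i. if i < k then y i else x i)) \<in> measurable (PiM {..<k} (\<lambda>_. lborel)) (Rn n)"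
  unfolding Rn_def
proof (rule measurable_PiM_single')
  fix i assume "i \<in> {..<n}"
  show "(\<lambda>y. if i < k then y i else x i) \<in> measurable (PiM {..<k} (\<lambda>_. lborel)) lborel"
    by (cases "i < k") auto
next
  show "(\<lambda>y i. if i < k then y i else x i) \<in> space (PiM {..<k} (\<lambda>_. lborel)) \<rightarrow> (\<Pi>\<^sub>E i\<in>{..<n}. space lborel)"
    using assms by (auto simp: space_Rn PiE_def extensional_def)
qed

lemma mixE_one_PiM:
  assumes hm[measurable]: "h \<in> borel_measurable (Rn n)" and "k \<le> n" and "x \<in> space (Rn n)"
  shows "mixE (\<lambda>_. 1) k h x = (\<integral>\<^sup>+y. h (\<lambda>i. if i < k then y i else x i) \<partial>PiM {..<k} (\<lambda>_. lborel))"
  using assms(2,3)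
proof (induction k arbitrary: x)
  case 0
  have "(\<lambda>i. if i < (0::nat) then y i else x i) = x" for y by simp
  then show ?case by (simp add: PiM_empty nn_integral_count_space_finite)
next
  case (Suc k)
  interpret product_sigma_finite "\<lambda>_. lborel" by standard
  have kn: "k < n" using Suc by simp
  have fm: "(\<lambda>z. h (\<lambda>i. if i < Suc k then z i else x i)) \<in> borel_measurable (PiM (insert k {..<k}) (\<lambda>_. lborel))"
  proof -
    have "insert k {..<k} = {..<Suc k}" by auto
    then show ?thesis using measurable_compose[OF merge_meas[OF Suc.prems] hm] by simp
  qed
  have "(\<integral>\<^sup>+y. h (\<lambda>i. if i < Suc k then y i else x i) \<partial>PiM {..<Suc k} (\<lambda>_. lborel))
      = (\<integral>\<^sup>+y. h (\<lambda>i. if i < Suc k then y i else x i) \<partial>PiM (insert k {..<k}) (\<lambda>_. lborel))"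
    by (simp add: lessThan_Suc)
  also have "\<dots> = (\<integral>\<^sup>+t. (\<integral>\<^sup>+y. h (\<lambda>i. if i < Suc k then (y(k := t)) i else x i) \<partial>PiM {..<k} (\<lambda>_. lborel)) \<partial>lborel)"
    by (rule product_nn_integral_insert_rev[OF _ _ fm]) auto
  also have "\<dots> = (\<integral>\<^sup>+t. mixE (\<lambda>_. 1) k h (x(k := t)) \<partial>lborel)"
  proof (rule nn_integral_cong)
    fix t
    have xs: "x(k := t) \<in> space (Rn n)" using upd_space[OF Suc.prems(2) kn] .
    have e: "(\<lambda>i. if i < Suc k then (y(k := t)) i else x i) = (\<lambda>i. if i < k then y i else (x(k := t)) i)" for y
      by (auto simp: fun_eq_iff)
    show "(\<integral>\<^sup>+y. h (\<lambda>i. if i < Suc k then (y(k := t)) i else x i) \<partial>PiM {..<k} (\<lambda>_. lborel)) = mixE (\<lambda>_. 1) k h (x(k := t))"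
      unfolding e by (rule Suc.IH[OF _ xs, symmetric]) (use kn in simp)
  qed
  also have "\<dots> = mixE (\<lambda>_. 1) (Suc k) h x" by simp
  finally show ?case by simp
qed

lemma nn_integral_Rn_iter:
  assumes hm[measurable]: "h \<in> borel_measurable (Rn n)"
  shows "(\<integral>\<^sup>+y. h y \<partial>Rn n) = mixE (\<lambda>_. 1) n h (\<lambda>_. undefined)"
proof -
  have "mixE (\<lambda>_. 1) n h (\<lambda>_. undefined) = (\<integral>\<^sup>+y. h (\<lambda>i. if i < n then y i else undefined) \<partial>PiM {..<n} (\<lambda>_. lborel))"
    by (rule mixE_one_PiM[OF hm]) (auto simp: undef_space)
  also have "\<dots> = (\<integral>\<^sup>+y. h y \<partial>Rn n)"
    unfolding Rn_def
    by (rule nn_integral_cong) (auto simp: space_PiM PiE_def extensional_def intro!: arg_cong[where f=h])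
  finally show ?thesis by simp
qed

lemma change_of_vars:
  assumes c: "\<forall>i<n. c i \<noteq> 0" and hm[measurable]: "h \<in> borel_measurable (Rn n)"
  shows "(\<integral>\<^sup>+y. h (dil n c y) \<partial>Rn n) = ennreal (\<Prod>i<n. 1 / \<bar>c i\<bar>) * (\<integral>\<^sup>+y. h y \<partial>Rn n)"
proof -
  have "(\<integral>\<^sup>+y. h (dil n c y) \<partial>Rn n) = mixE (\<lambda>_. 1) n (\<lambda>y. h (dil n c y)) (\<lambda>_. undefined)"
    by (rule nn_integral_Rn_iter) measurable
  also have "\<dots> = ennreal (dilK (\<lambda>_. 1) c n) * mixE (\<lambda>_. 1) n h (dil n c (\<lambda>_. undefined))"
    by (rule mixE_dil) (use c in \<open>auto simp: undef_space\<close>)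
  also have "mixE (\<lambda>_. 1) n h (dil n c (\<lambda>_. undefined)) = mixE (\<lambda>_. 1) n h (\<lambda>_. undefined)"
    by (rule mixE_local) (auto simp: dil_def)
  also have "\<dots> = (\<integral>\<^sup>+y. h y \<partial>Rn n)" by (rule nn_integral_Rn_iter[symmetric]) measurable
  also have "dilK (\<lambda>_. 1) c n = (\<Prod>i<n. 1 / \<bar>c i\<bar>)"
    unfolding dilK_def using c by (intro prod.cong) (auto simp: powr_minus_divide)
  finally show ?thesis .
qed

definition phi1 :: "real \<Rightarrow> real \<Rightarrow> real \<Rightarrow> real" where
  "phi1 e q u = min e (1 / \<bar>u\<bar>) * \<bar>u\<bar> powr (- 1 / q)"

definition cq :: "real \<Rightarrow> ennreal" where
  "cq q = (\<integral>\<^sup>+u. ennreal (phi1 1 q u) \<partial>lborel)"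

lemma phi1_nonneg: "e \<ge> 0 \<Longrightarrow> phi1 e q u \<ge> 0"
  by (simp add: phi1_def)

lemma phi1_meas[measurable]: "phi1 e q \<in> borel_measurable borel"
  unfolding phi1_def by measurable

lemma cq_finite:
  assumes q: "q > 1"
  shows "cq q < top"
proof -
  define g where "g u = indicator {0..1} u * u powr (- 1 / q) + indicator {1..} u * u powr (- 1 - 1 / q)" for u :: real
  have g_nonneg: "g u \<ge> 0" for u unfolding g_def by (auto simp: indicator_def)
  have gm[measurable]: "g \<in> borel_measurable borel" unfolding g_def by measurable
  have le: "phi1 1 q u \<le> g u + g (- u)" for u
  proof -
    consider "u = 0" | "0 < \<bar>u\<bar>" "\<bar>u\<bar> \<le> 1" | "\<bar>u\<bar> > 1" by linarith
    then show ?thesis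
    proof cases
      case 1 then show ?thesis by (simp add: phi1_def g_def)
    next
      case 2
      have "phi1 1 q u = \<bar>u\<bar> powr (- 1 / q)" using 2 by (simp add: phi1_def min_def field_simps)
      also have "\<dots> \<le> g u + g (- u)"
        using 2 g_nonneg[of u] g_nonneg[of "-u"] by (cases "u \<ge> 0") (auto simp: g_def indicator_def)
      finally show ?thesis .
    next
      case 3
      have "phi1 1 q u = \<bar>u\<bar> powr (- 1) * \<bar>u\<bar> powr (- 1 / q)"
        using 3 by (simp add: phi1_def min_def powr_minus_divide)
      also have "\<dots> = \<bar>u\<bar> powr (- 1 - 1 / q)" by (simp only: powr_add[symmetric]) (simp add: algebra_simps)
      also have "\<dots> \<le> g u + g (- u)"
        using 3 g_nonneg[of u] g_nonneg[of "-u"] by (cases "u \<ge> 0") (auto simp: g_def indicator_def)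
      finally show ?thesis .
    qed
  qed
  have Ig: "(\<integral>\<^sup>+u. ennreal (g u) \<partial>lborel) < top"
  proof -
    have h1: "((\<lambda>u. u powr (- 1 / q)) has_integral (1 powr (- 1 / q + 1) / (- 1 / q + 1))) {0..1}"
      by (rule has_integral_powr_from_0) (use q in auto)
    have i1: "(\<integral>\<^sup>+u. ennreal (u powr (- 1 / q)) * indicator {0..1} u \<partial>lborel) = ennreal (1 powr (- 1 / q + 1) / (- 1 / q + 1))"
      by (rule nn_integral_has_integral_lebesgue'[OF _ h1]) auto
    have h2: "((\<lambda>u. u powr (- 1 - 1 / q)) has_integral (- (1 powr (- 1 - 1 / q + 1)) / (- 1 - 1 / q + 1))) {1..}"
      by (rule has_integral_powr_to_inf) (use q in auto)
    have i2: "(\<integral>\<^sup>+u. ennreal (u powr (- 1 - 1 / q)) * indicator {1..} u \<partial>lborel) = ennreal (- (1 powr (- 1 - 1 / q + 1)) / (- 1 - 1 / q + 1))"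
      by (rule nn_integral_has_integral_lebesgue'[OF _ h2]) auto
    have "(\<integral>\<^sup>+u. ennreal (g u) \<partial>lborel) = (\<integral>\<^sup>+u. ennreal (u powr (- 1 / q)) * indicator {0..1} u + ennreal (u powr (- 1 - 1 / q)) * indicator {1..} u \<partial>lborel)"
      by (rule nn_integral_cong) (auto simp: g_def indicator_def)
    also have "\<dots> = (\<integral>\<^sup>+u. ennreal (u powr (- 1 / q)) * indicator {0..1} u \<partial>lborel) + (\<integral>\<^sup>+u. ennreal (u powr (- 1 - 1 / q)) * indicator {1..} u \<partial>lborel)"
      by (rule nn_integral_add) auto
    also have "\<dots> < top" unfolding i1 i2 by simp
    finally show ?thesis .
  qed
  have "cq q \<le> (\<integral>\<^sup>+u. ennreal (g u) + ennreal (g (- u)) \<partial>lborel)"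
    unfolding cq_def by (intro nn_integral_mono) (use le g_nonneg in \<open>simp add: ennreal_plus[symmetric] del: ennreal_plus\<close>)
  also have "\<dots> = (\<integral>\<^sup>+u. ennreal (g u) \<partial>lborel) + (\<integral>\<^sup>+u. ennreal (g (- u)) \<partial>lborel)"
    by (rule nn_integral_add) auto
  also have "(\<integral>\<^sup>+u. ennreal (g (- u)) \<partial>lborel) = (\<integral>\<^sup>+u. ennreal (g u) \<partial>lborel)"
    using nn_integral_scale[of "\<lambda>u. ennreal (g u)" "-1"] by simp
  also have "(\<integral>\<^sup>+u. ennreal (g u) \<partial>lborel) + (\<integral>\<^sup>+u. ennreal (g u) \<partial>lborel) < top"
    using Ig by simp
  finally show ?thesis .
qed

lemma phi1_scale:
  assumes e: "e > 0" and q: "q > 0"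
  shows "(\<integral>\<^sup>+u. ennreal (phi1 e q u) \<partial>lborel) = ennreal (e powr (1 / q)) * cq q"
proof -
  have pt: "phi1 e q u = e powr (1 + 1 / q) * phi1 1 q (e * u)" for u
  proof (cases "u = 0")
    case True then show ?thesis by (simp add: phi1_def)
  next
    case False
    have "phi1 1 q (e * u) = min 1 (1 / (e * \<bar>u\<bar>)) * (e * \<bar>u\<bar>) powr (- 1 / q)"
      using e by (simp add: phi1_def abs_mult)
    also have "min 1 (1 / (e * \<bar>u\<bar>)) = min e (1 / \<bar>u\<bar>) / e"
      using e False by (simp add: min_def field_simps)
    also have "(e * \<bar>u\<bar>) powr (- 1 / q) = e powr (- 1 / q) * \<bar>u\<bar> powr (- 1 / q)"
      using e by (simp add: powr_mult)
    finally have "phi1 1 q (e * u) = min e (1 / \<bar>u\<bar>) * \<bar>u\<bar> powr (- 1 / q) * (e powr (- 1 / q) / e)"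
      by simp
    then have "e powr (1 + 1 / q) * phi1 1 q (e * u) = min e (1 / \<bar>u\<bar>) * \<bar>u\<bar> powr (- 1 / q) * (e powr (1 + 1 / q) * e powr (- 1 / q) / e)"
      by simp
    also have "e powr (1 + 1 / q) * e powr (- 1 / q) / e = 1"
      using e by (simp add: powr_add[symmetric])
    finally show ?thesis by (simp add: phi1_def)
  qed
  have "(\<integral>\<^sup>+u. ennreal (phi1 e q u) \<partial>lborel) = (\<integral>\<^sup>+u. ennreal (e powr (1 + 1 / q)) * ennreal (phi1 1 q (e * u)) \<partial>lborel)"
    by (rule nn_integral_cong) (simp add: pt ennreal_mult phi1_nonneg)
  also have "\<dots> = ennreal (e powr (1 + 1 / q)) * (ennreal (1 / \<bar>e\<bar>) * cq q)"
    unfolding cq_def using e nn_integral_scale[of "\<lambda>u. ennreal (phi1 1 q u)" e] by (simp add: nn_integral_cmult abs_of_pos[OF e])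
  also have "\<dots> = (ennreal (e powr (1 + 1 / q)) * ennreal (1 / e)) * cq q"
    using e by (simp add: mult.assoc)
  also have "ennreal (e powr (1 + 1 / q)) * ennreal (1 / e) = ennreal (e powr (1 + 1 / q) * (1 / e))"
    by (rule ennreal_mult'[symmetric]) simp
  also have "e powr (1 + 1 / q) * (1 / e) = e powr (1 / q)"
    using e by (simp add: powr_add)
  finally show ?thesis .
qed

lemma sf_Rn: "sigma_finite_measure (Rn n)"
proof -
  interpret product_sigma_finite "\<lambda>_. lborel" by standard
  show ?thesis unfolding Rn_def by (rule sigma_finite) simp
qed

lemma mixE_zero: "\<forall>i<k. p i > 0 \<Longrightarrow> mixE p k (\<lambda>_. 0) x = 0"
  by (induction k arbitrary: x) auto

lemma mixE_cmult:
  assumes "\<forall>i<k. p i > 0" "c \<ge> 0" and Gm[measurable]: "G \<in> borel_measurable (Rn n)" and "k \<le> n"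
    and "x \<in> space (Rn n)"
  shows "mixE p k (\<lambda>y. ennreal c * G y) x = ennreal c * mixE p k G x"
  using assms(1,4,5)
proof (induction k arbitrary: x)
  case 0 then show ?case by simp
next
  case (Suc k)
  have pk: "p k > 0" using Suc.prems by simp
  have kn: "k < n" using Suc.prems by simp
  have mG: "mixE p k G \<in> borel_measurable (Rn n)" by (rule mixE_meas1[OF Gm]) (use kn in simp)
  have [measurable]: "(\<lambda>t. mixE p k G (x(k := t))) \<in> borel_measurable lborel"
    by (rule measurable_compose[OF upd_meas_const[OF Suc.prems(3) kn] mG])
  have IH: "mixE p k (\<lambda>y. ennreal c * G y) (x(k := t)) = ennreal c * mixE p k G (x(k := t))" for t
  proof -
    have xs: "x(k := t) \<in> space (Rn n)" using upd_space[OF Suc.prems(3) kn] .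
    show ?thesis by (rule Suc.IH[OF _ _ xs]) (use Suc.prems in auto)
  qed
  have "mixE p (Suc k) (\<lambda>y. ennreal c * G y) x
     = epowr (\<integral>\<^sup>+t. ennreal (c powr p k) * epowr (mixE p k G (x(k := t))) (p k) \<partial>lborel) (1 / p k)"
    using IH pk assms(2) by (simp add: epowr_cmult)
  also have "\<dots> = epowr (ennreal (c powr p k) * (\<integral>\<^sup>+t. epowr (mixE p k G (x(k := t))) (p k) \<partial>lborel)) (1 / p k)"
    by (simp add: nn_integral_cmult)
  also have "\<dots> = ennreal ((c powr p k) powr (1 / p k)) * mixE p (Suc k) G x"
    using pk by (simp add: epowr_cmult)
  also have "(c powr p k) powr (1 / p k) = c"
    using pk assms(2) by (simp add: powr_powr)
  finally show ?case .
qed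

lemma AE_nonzero: "AE s in Rn n. \<forall>i<n. s i \<noteq> 0"
proof (rule AE_I')
  define Z where "Z = {s \<in> space (Rn n). \<exists>i<n. s i = 0}"
  have Zs[measurable]: "Z \<in> sets (Rn n)"
  proof -
    have "Z = (\<Union>i<n. {s \<in> space (Rn n). s i = 0})" unfolding Z_def by auto
    also have "\<dots> \<in> sets (Rn n)" unfolding Rn_def by measurable
    finally show ?thesis .
  qed
  have "emeasure (Rn n) Z = (\<integral>\<^sup>+s. indicator Z s \<partial>Rn n)" by simp
  also have "\<dots> = mixE (\<lambda>_. 1) n (indicator Z) (\<lambda>_. undefined)"
    by (rule nn_integral_Rn_iter) measurable
  also have "\<dots> \<le> mixE (\<lambda>_. 1) n (\<lambda>_. 0) (\<lambda>_. undefined)"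
    by (rule mixE_mono_AE) (auto simp: undef_space Z_def)
  also have "\<dots> = 0" by (simp add: mixE_zero)
  finally have "emeasure (Rn n) Z = 0" by simp
  then show "Z \<in> null_sets (Rn n)" using Zs by auto
  show "{s \<in> space (Rn n). \<not> (\<forall>i<n. s i \<noteq> 0)} \<subseteq> Z" unfolding Z_def by auto
qed

lemma dil2_meas[measurable]: "(\<lambda>w. dil n (snd w) (fst w)) \<in> measurable (Rn n \<Otimes>\<^sub>M Rn n) (Rn n)"
  unfolding Rn_def dil_def
  apply (rule measurable_PiM_single')
  subgoal for i
    by (cases "i < n") simp_all
  apply (auto simp: space_pair_measure space_PiM PiE_def extensional_def)
  done

definition wt :: "nat \<Rightarrow> real \<Rightarrow> (nat \<Rightarrow> real) \<Rightarrow> real" where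
  "wt n e s = (\<Prod>i<n. min e (1 / \<bar>s i\<bar>))"

lemma wt_nonneg: "e \<ge> 0 \<Longrightarrow> wt n e s \<ge> 0"
  unfolding wt_def by (intro prod_nonneg) auto

lemma wt_meas[measurable]: "wt n e \<in> borel_measurable (Rn n)"
  unfolding wt_def Rn_def by measurable

lemma dilK_nonneg: "dilK p c k \<ge> 0"
  unfolding dilK_def by (intro prod_nonneg) auto

lemma op_bound:
  assumes p: "\<forall>i<n. p i > 1" and e: "e > 0" and Gm[measurable]: "G \<in> borel_measurable (Rn n)"
  shows "mixE p n (\<lambda>x. \<integral>\<^sup>+s. ennreal (wt n e s) * G (dil n s x) \<partial>Rn n) (\<lambda>_. undefined)
     \<le> (\<Prod>i<n. ennreal (e powr (1 / p i)) * cq (p i)) * mixE p n G (\<lambda>_. undefined)"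
proof -
  have p0: "\<forall>i<n. p i > 0" using p by auto
  have Fm: "(\<lambda>(y, s). ennreal (wt n e s) * G (dil n s y)) \<in> borel_measurable (Rn n \<Otimes>\<^sub>M Rn n)"
  proof -
    have "(\<lambda>w. G (dil n (snd w) (fst w))) \<in> borel_measurable (Rn n \<Otimes>\<^sub>M Rn n)"
      by (rule measurable_compose[OF dil2_meas Gm])
    then show ?thesis by (simp add: case_prod_beta')
  qed
  have "mixE p n (\<lambda>x. \<integral>\<^sup>+s. ennreal (wt n e s) * G (dil n s x) \<partial>Rn n) (\<lambda>_. undefined)
      \<le> (\<integral>\<^sup>+s. mixE p n (\<lambda>y. ennreal (wt n e s) * G (dil n s y)) (\<lambda>_. undefined) \<partial>Rn n)"
    by (rule mix_minkowski[OF p sf_Rn Fm]) (auto simp: undef_space)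
  also have "\<dots> \<le> (\<integral>\<^sup>+s. ennreal (\<Prod>i<n. phi1 e (p i) (s i)) * mixE p n G (\<lambda>_. undefined) \<partial>Rn n)"
  proof (rule nn_integral_mono_AE)
    show "AE s in Rn n. mixE p n (\<lambda>y. ennreal (wt n e s) * G (dil n s y)) (\<lambda>_. undefined)
        \<le> ennreal (\<Prod>i<n. phi1 e (p i) (s i)) * mixE p n G (\<lambda>_. undefined)"
      using AE_nonzero
    proof eventually_elim
      case (elim s)
      have "mixE p n (\<lambda>y. ennreal (wt n e s) * G (dil n s y)) (\<lambda>_. undefined)
          = ennreal (wt n e s) * mixE p n (\<lambda>y. G (dil n s y)) (\<lambda>_. undefined)"
        by (rule mixE_cmult[where n=n]) (use p0 e wt_nonneg in \<open>auto simp: undef_space\<close>)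
      also have "mixE p n (\<lambda>y. G (dil n s y)) (\<lambda>_. undefined) = ennreal (dilK p s n) * mixE p n G (dil n s (\<lambda>_. undefined))"
        by (rule mixE_dil) (use p0 elim in \<open>auto simp: undef_space\<close>)
      also have "mixE p n G (dil n s (\<lambda>_. undefined)) = mixE p n G (\<lambda>_. undefined)"
        by (rule mixE_local) (auto simp: dil_def)
      also have "ennreal (wt n e s) * (ennreal (dilK p s n) * mixE p n G (\<lambda>_. undefined))
          = ennreal (wt n e s * dilK p s n) * mixE p n G (\<lambda>_. undefined)"
        using e wt_nonneg[of e n s] dilK_nonneg[of p s n] by (simp add: ennreal_mult mult.assoc)
      also have "wt n e s * dilK p s n = (\<Prod>i<n. phi1 e (p i) (s i))"
        unfolding wt_def dilK_def phi1_def by (simp add: prod.distrib)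
      finally show ?case by simp
    qed
  qed
  also have "\<dots> = (\<integral>\<^sup>+s. ennreal (\<Prod>i<n. phi1 e (p i) (s i)) \<partial>Rn n) * mixE p n G (\<lambda>_. undefined)"
  proof (rule nn_integral_multc)
    show "(\<lambda>s. ennreal (\<Prod>i<n. phi1 e (p i) (s i))) \<in> borel_measurable (Rn n)"
      unfolding Rn_def by measurable
  qed
  also have "(\<lambda>s. ennreal (\<Prod>i<n. phi1 e (p i) (s i))) = (\<lambda>s. (\<Prod>i<n. ennreal (phi1 e (p i) (s i))))"
    using e by (simp add: prod_ennreal phi1_nonneg)
  also have "(\<integral>\<^sup>+s. (\<Prod>i<n. ennreal (phi1 e (p i) (s i))) \<partial>Rn n) = (\<Prod>i<n. \<integral>\<^sup>+u. ennreal (phi1 e (p i) u) \<partial>lborel)"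
  proof -
    interpret product_sigma_finite "\<lambda>_. lborel" by standard
    show ?thesis unfolding Rn_def by (rule product_nn_integral_prod) auto
  qed
  also have "\<dots> = (\<Prod>i<n. ennreal (e powr (1 / p i)) * cq (p i))"
    by (rule prod.cong) (use e p0 phi1_scale in auto)
  finally show ?thesis .
qed

lemma enorm_nonneg: "enorm n x \<ge> 0"
  by (simp add: enorm_def sum_nonneg)

lemma enorm_ge_comp: "i < n \<Longrightarrow> \<bar>x i\<bar> \<le> enorm n x"
proof -
  assume i: "i < n"
  have "(x i)\<^sup>2 \<le> (\<Sum>j<n. (x j)\<^sup>2)"
    using i by (intro member_le_sum) auto
  then have "sqrt ((x i)\<^sup>2) \<le> enorm n x" unfolding enorm_def by (rule real_sqrt_le_mono)
  then show ?thesis by simp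
qed

lemma enorm_dil_const: "c \<ge> 0 \<Longrightarrow> enorm n (dil n (\<lambda>_. c) y) = c * enorm n y"
proof -
  assume c: "c \<ge> 0"
  have "(\<Sum>i<n. (dil n (\<lambda>_. c) y i)\<^sup>2) = c\<^sup>2 * (\<Sum>i<n. (y i)\<^sup>2)"
    by (simp add: dil_def sum_distrib_left power_mult_distrib)
  then show ?thesis using c by (simp add: enorm_def real_sqrt_mult)
qed

lemma enorm_meas[measurable]: "enorm n \<in> borel_measurable (Rn n)"
  unfolding enorm_def Rn_def by measurable

lemma ball0_sets[measurable]: "ball0 n r \<in> sets (Rn n)"
proof -
  have "ball0 n r = {x \<in> space (Rn n). enorm n x < r}" by (simp add: ball0_def)
  also have "\<dots> \<in> sets (Rn n)" by measurable
  finally show ?thesis .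
qed

lemma indic_ball_meas[measurable]: "indic_ball n r \<in> borel_measurable (Rn n)"
  unfolding indic_ball_def by measurable

lemma enorm_pos: "n \<ge> 1 \<Longrightarrow> \<forall>i<n. x i \<noteq> 0 \<Longrightarrow> enorm n x > 0"
proof -
  assume "n \<ge> 1" "\<forall>i<n. x i \<noteq> 0"
  then have "\<bar>x 0\<bar> > 0" by auto
  also have "\<bar>x 0\<bar> \<le> enorm n x" using \<open>n \<ge> 1\<close> by (intro enorm_ge_comp) auto
  finally show ?thesis .
qed

lemma dil_comm: "x \<in> space (Rn n) \<Longrightarrow> s \<in> space (Rn n) \<Longrightarrow> dil n x s = dil n s x"
  by (auto simp: dil_def space_Rn fun_eq_iff)

lemma set_integral_bound:
  fixes g :: "'a \<Rightarrow> real"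
  shows "ennreal \<bar>LINT t:A|M. g t\<bar> \<le> (\<integral>\<^sup>+t. ennreal (indicator A t * \<bar>g t\<bar>) \<partial>M)"
proof (cases "integrable M (\<lambda>t. indicator A t *\<^sub>R g t)")
  case True
  have "ennreal (norm (integral\<^sup>L M (\<lambda>t. indicator A t *\<^sub>R g t))) \<le> (\<integral>\<^sup>+t. ennreal (norm (indicator A t *\<^sub>R g t)) \<partial>M)"
    using integral_norm_bound_ennreal[OF True] by simp
  moreover have "norm (indicator A t *\<^sub>R g t) = indicator A t * \<bar>g t\<bar>" for t
    by (simp add: indicator_def)
  ultimately show ?thesis by (simp add: set_lebesgue_integral_def)
next
  case False
  then show ?thesis by (simp add: set_lebesgue_integral_def not_integrable_integral_eq)
qed

lemma mixE_cong_space: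
  assumes p: "\<forall>i<n. p i > 0" and eq: "\<And>y. y \<in> space (Rn n) \<Longrightarrow> G y = G' y"
  shows "mixE p n G (\<lambda>_. undefined) = mixE p n G' (\<lambda>_. undefined)"
proof (rule antisym)
  show "mixE p n G (\<lambda>_. undefined) \<le> mixE p n G' (\<lambda>_. undefined)"
    by (rule mixE_mono_AE) (use p eq in \<open>auto simp: undef_space\<close>)
  show "mixE p n G' (\<lambda>_. undefined) \<le> mixE p n G (\<lambda>_. undefined)"
    by (rule mixE_mono_AE) (use p eq in \<open>auto simp: undef_space\<close>)
qed

lemma ball_dil2: "y \<in> space (Rn n) \<Longrightarrow> (dil n (\<lambda>_. 2) y \<in> ball0 n (2 * r)) \<longleftrightarrow> (y \<in> ball0 n r)"
  by (auto simp: ball0_def enorm_dil_const dil_space)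

lemma indic_ball_dil2: "y \<in> space (Rn n) \<Longrightarrow> indic_ball n (2 * r) (dil n (\<lambda>_. 2) y) = indic_ball n r y"
  by (simp add: indic_ball_def indicator_def ball_dil2)

lemma ball_emeasure_scale:
  "emeasure (Rn n) (ball0 n (2 * r)) = ennreal (2 ^ n) * emeasure (Rn n) (ball0 n r)"
proof -
  have "(\<integral>\<^sup>+y. indicator (ball0 n (2 * r)) (dil n (\<lambda>_. 2) y) \<partial>Rn n)
      = ennreal (\<Prod>i<n. 1 / \<bar>2::real\<bar>) * (\<integral>\<^sup>+y. indicator (ball0 n (2 * r)) y \<partial>Rn n)"
    by (rule change_of_vars) auto
  moreover have "(\<integral>\<^sup>+y. indicator (ball0 n (2 * r)) (dil n (\<lambda>_. 2) y) \<partial>Rn n) = emeasure (Rn n) (ball0 n r)"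
  proof -
    have "(\<integral>\<^sup>+y. indicator (ball0 n (2 * r)) (dil n (\<lambda>_. 2) y) \<partial>Rn n) = (\<integral>\<^sup>+y. indicator (ball0 n r) y \<partial>Rn n)"
      by (rule nn_integral_cong) (simp add: indicator_def ball_dil2)
    then show ?thesis by simp
  qed
  ultimately have "emeasure (Rn n) (ball0 n r) = ennreal ((1/2) ^ n) * emeasure (Rn n) (ball0 n (2 * r))"
    by simp
  then have "ennreal (2 ^ n) * emeasure (Rn n) (ball0 n r) = (ennreal (2 ^ n) * ennreal ((1/2) ^ n)) * emeasure (Rn n) (ball0 n (2 * r))"
    by (simp add: mult.assoc)
  also have "ennreal (2 ^ n) * ennreal ((1/2) ^ n) = 1"
    by (simp add: ennreal_mult'[symmetric] power_mult_distrib[symmetric])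
  finally show ?thesis by simp
qed

lemma ball_measure_scale:
  "measure (Rn n) (ball0 n (2 * r)) = 2 ^ n * measure (Rn n) (ball0 n r)"
  unfolding measure_def ball_emeasure_scale by (simp add: enn2real_mult)

definition sig :: "nat \<Rightarrow> (nat \<Rightarrow> real) \<Rightarrow> real" where
  "sig n p = (\<Sum>i<n. 1 / p i)"

lemma mix_ball_scale:
  assumes p: "\<forall>i<n. p i > 0"
  shows "mixnorm n p (indic_ball n (2 * r)) = ennreal (2 powr sig n p) * mixnorm n p (indic_ball n r)"
proof -
  define G where "G y = ennreal \<bar>indic_ball n (2 * r) y\<bar>" for y
  have Gm[measurable]: "G \<in> borel_measurable (Rn n)" unfolding G_def by measurable
  have "mixE p n (\<lambda>y. G (dil n (\<lambda>_. 2) y)) (\<lambda>_. undefined) = ennreal (dilK p (\<lambda>_. 2) n) * mixE p n G (dil n (\<lambda>_. 2) (\<lambda>_. undefined))"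
    by (rule mixE_dil) (use p in \<open>auto simp: undef_space\<close>)
  also have "mixE p n G (dil n (\<lambda>_. 2) (\<lambda>_. undefined)) = mixE p n G (\<lambda>_. undefined)"
    by (rule mixE_local) (auto simp: dil_def)
  also have "mixE p n (\<lambda>y. G (dil n (\<lambda>_. 2) y)) (\<lambda>_. undefined) = mixE p n (\<lambda>y. ennreal \<bar>indic_ball n r y\<bar>) (\<lambda>_. undefined)"
    by (rule mixE_cong_space[OF p]) (simp add: G_def indic_ball_dil2)
  also have "dilK p (\<lambda>_. 2) n = 2 powr (- sig n p)"
    unfolding dilK_def sig_def by (simp add: powr_sum sum_negf[symmetric])
  finally have eq: "mixnorm n p (indic_ball n r) = ennreal (2 powr (- sig n p)) * mixnorm n p (indic_ball n (2 * r))"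
    unfolding mixnorm_def mixpart_mixE G_def .
  have "ennreal (2 powr sig n p) * mixnorm n p (indic_ball n r)
      = (ennreal (2 powr sig n p) * ennreal (2 powr (- sig n p))) * mixnorm n p (indic_ball n (2 * r))"
    unfolding eq by (simp add: mult.assoc)
  also have "ennreal (2 powr sig n p) * ennreal (2 powr (- sig n p)) = 1"
    by (simp add: ennreal_mult'[symmetric] powr_add[symmetric])
  finally show ?thesis by simp
qed

lemma powr_prod_ratio:
  assumes "\<rho> > 0"
  shows "\<rho> powr (- real n) * (\<Prod>i<n. \<bar>x i\<bar>) = (\<Prod>i<n. \<bar>x i\<bar> / \<rho>)"
proof -
  have "\<rho> powr (- real n) = 1 / \<rho> ^ n" using assms by (simp add: powr_minus powr_realpow divide_inverse)
  moreover have "(\<Prod>i<n. \<bar>x i\<bar> / \<rho>) = (\<Prod>i<n. \<bar>x i\<bar>) / \<rho> ^ n" by (simp add: prod_dividef)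
  ultimately show ?thesis by simp
qed

lemma change_of_vars_x:
  assumes x: "\<forall>i<n. x i \<noteq> 0" and hm[measurable]: "h \<in> borel_measurable (Rn n)"
  shows "(\<integral>\<^sup>+t. h t \<partial>Rn n) = ennreal (\<Prod>i<n. \<bar>x i\<bar>) * (\<integral>\<^sup>+s. h (dil n x s) \<partial>Rn n)"
proof -
  have "(\<integral>\<^sup>+s. h (dil n x s) \<partial>Rn n) = ennreal (\<Prod>i<n. 1 / \<bar>x i\<bar>) * (\<integral>\<^sup>+t. h t \<partial>Rn n)"
    by (rule change_of_vars[OF x hm])
  then have "ennreal (\<Prod>i<n. \<bar>x i\<bar>) * (\<integral>\<^sup>+s. h (dil n x s) \<partial>Rn n)
      = (ennreal (\<Prod>i<n. \<bar>x i\<bar>) * ennreal (\<Prod>i<n. 1 / \<bar>x i\<bar>)) * (\<integral>\<^sup>+t. h t \<partial>Rn n)"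
    by (simp add: mult.assoc)
  also have "ennreal (\<Prod>i<n. \<bar>x i\<bar>) * ennreal (\<Prod>i<n. 1 / \<bar>x i\<bar>) = 1"
  proof -
    have "(\<Prod>i<n. \<bar>x i\<bar>) * (\<Prod>i<n. 1 / \<bar>x i\<bar>) = (\<Prod>i<n. \<bar>x i\<bar> * (1 / \<bar>x i\<bar>))"
      by (simp only: prod.distrib[symmetric])
    also have "\<dots> = 1" using x by (intro prod.neutral) auto
    finally show ?thesis by (simp add: ennreal_mult'[symmetric] prod_nonneg)
  qed
  finally show ?thesis by simp
qed

lemma hardy_dom:
  assumes n: "n \<ge> 1" and fm[measurable]: "f \<in> borel_measurable (Rn n)"
    and x: "x \<in> space (Rn n)" and xnz: "\<forall>i<n. x i \<noteq> 0"
  shows "ennreal \<bar>hardy n f x * indic_ball n r x\<bar>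
     \<le> (\<integral>\<^sup>+s. ennreal (wt n 1 s) * ennreal \<bar>f (dil n s x) * indic_ball n r (dil n s x)\<bar> \<partial>Rn n)"
proof (cases "x \<in> ball0 n r")
  case False then show ?thesis by (simp add: indic_ball_def)
next
  case True
  define \<rho> where "\<rho> = enorm n x"
  have \<rho>: "\<rho> > 0" "\<rho> < r" using enorm_pos[OF n xnz] True unfolding \<rho>_def by (auto simp: ball0_def)
  define A where "A = {t \<in> space (Rn n). enorm n t < \<rho>}"
  have As[measurable]: "A \<in> sets (Rn n)" unfolding A_def by measurable
  define h where "h t = ennreal (indicator A t * \<bar>f t\<bar>)" for t
  have hm[measurable]: "h \<in> borel_measurable (Rn n)" unfolding h_def by measurable
  have "ennreal \<bar>hardy n f x * indic_ball n r x\<bar> = ennreal (\<rho> powr (- real n)) * ennreal \<bar>LINT t:A|Rn n. f t\<bar>"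
    using True unfolding hardy_def A_def \<rho>_def
    by (simp add: indic_ball_def abs_mult ennreal_mult)
  also have "\<dots> \<le> ennreal (\<rho> powr (- real n)) * (\<integral>\<^sup>+t. h t \<partial>Rn n)"
    unfolding h_def by (intro mult_left_mono set_integral_bound) auto
  also have "(\<integral>\<^sup>+t. h t \<partial>Rn n) = ennreal (\<Prod>i<n. \<bar>x i\<bar>) * (\<integral>\<^sup>+s. h (dil n x s) \<partial>Rn n)"
    by (rule change_of_vars_x[OF xnz hm])
  also have "ennreal (\<rho> powr (- real n)) * (ennreal (\<Prod>i<n. \<bar>x i\<bar>) * (\<integral>\<^sup>+s. h (dil n x s) \<partial>Rn n))
      = (\<integral>\<^sup>+s. ennreal (\<Prod>i<n. \<bar>x i\<bar> / \<rho>) * h (dil n x s) \<partial>Rn n)"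
  proof -
    have "ennreal (\<rho> powr (- real n)) * ennreal (\<Prod>i<n. \<bar>x i\<bar>) = ennreal (\<Prod>i<n. \<bar>x i\<bar> / \<rho>)"
      using powr_prod_ratio[OF \<rho>(1), of n x] by (simp add: ennreal_mult'[symmetric])
    moreover have "(\<lambda>s. h (dil n x s)) \<in> borel_measurable (Rn n)" by measurable
    ultimately show ?thesis by (simp add: nn_integral_cmult mult.assoc[symmetric])
  qed
  also have "\<dots> \<le> (\<integral>\<^sup>+s. ennreal (wt n 1 s) * ennreal \<bar>f (dil n s x) * indic_ball n r (dil n s x)\<bar> \<partial>Rn n)"
  proof (rule nn_integral_mono_AE)
    show "AE s in Rn n. ennreal (\<Prod>i<n. \<bar>x i\<bar> / \<rho>) * h (dil n x s)
        \<le> ennreal (wt n 1 s) * ennreal \<bar>f (dil n s x) * indic_ball n r (dil n s x)\<bar>"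
      using AE_nonzero AE_space
    proof eventually_elim
      case (elim s)
      have dc: "dil n x s = dil n s x" using dil_comm[OF x elim(2)] .
      define t where "t = dil n s x"
      have ts: "t \<in> space (Rn n)" unfolding t_def using dil_space[OF x] .
      show ?case
      proof (cases "t \<in> A")
        case False
        then show ?thesis by (simp add: h_def dc t_def[symmetric])
      next
        case tA: True
        then have tr: "t \<in> ball0 n r" using \<rho> unfolding A_def ball0_def by auto
        have le: "(\<Prod>i<n. \<bar>x i\<bar> / \<rho>) \<le> wt n 1 s"
          unfolding wt_def
        proof (rule prod_mono)
          fix i assume "i \<in> {..<n}"
          then have i: "i < n" by simp
          have "\<bar>x i\<bar> \<le> \<rho>" unfolding \<rho>_def by (rule enorm_ge_comp[OF i])
          then have a: "\<bar>x i\<bar> / \<rho> \<le> 1" using \<rho> by simp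
          have "\<bar>s i\<bar> * \<bar>x i\<bar> = \<bar>t i\<bar>" using i unfolding t_def dil_def by (simp add: abs_mult)
          also have "\<dots> \<le> enorm n t" by (rule enorm_ge_comp[OF i])
          also have "\<dots> < \<rho>" using tA unfolding A_def by simp
          finally have "\<bar>s i\<bar> * \<bar>x i\<bar> < \<rho>" .
          then have b: "\<bar>x i\<bar> / \<rho> \<le> 1 / \<bar>s i\<bar>" using \<rho> elim(1) i
            by (simp add: field_simps)
          show "0 \<le> \<bar>x i\<bar> / \<rho> \<and> \<bar>x i\<bar> / \<rho> \<le> min 1 (1 / \<bar>s i\<bar>)" using a b \<rho> by simp
        qed
        have "ennreal (\<Prod>i<n. \<bar>x i\<bar> / \<rho>) * h (dil n x s) = ennreal (\<Prod>i<n. \<bar>x i\<bar> / \<rho>) * ennreal \<bar>f t\<bar>"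
          using tA by (simp add: h_def dc t_def[symmetric])
        also have "\<dots> \<le> ennreal (wt n 1 s) * ennreal \<bar>f t\<bar>"
          by (intro mult_right_mono ennreal_leI le) auto
        also have "\<dots> = ennreal (wt n 1 s) * ennreal \<bar>f (dil n s x) * indic_ball n r (dil n s x)\<bar>"
          using tr by (simp add: t_def[symmetric] indic_ball_def)
        finally show ?thesis .
      qed
    qed
  qed
  finally show ?thesis .
qed

lemma cq_prod_real:
  assumes p: "\<forall>i<n. p i > 1"
  shows "(\<Prod>i<n. cq (p i)) = ennreal (\<Prod>i<n. enn2real (cq (p i)))"
proof -
  have "(\<Prod>i<n. cq (p i)) = (\<Prod>i<n. ennreal (enn2real (cq (p i))))"
    by (rule prod.cong) (use p cq_finite in \<open>auto simp: ennreal_enn2real_if less_top\<close>)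
  also have "\<dots> = ennreal (\<Prod>i<n. enn2real (cq (p i)))" by (simp add: prod_ennreal)
  finally show ?thesis .
qed

lemma hardy_local_bound:
  assumes n: "n \<ge> 1" and p: "\<forall>i<n. p i > 1" and fm[measurable]: "f \<in> borel_measurable (Rn n)"
  shows "mixnorm n p (\<lambda>x. hardy n f x * indic_ball n r x)
     \<le> (\<Prod>i<n. cq (p i)) * mixnorm n p (\<lambda>x. f x * indic_ball n r x)"
proof -
  have p0: "\<forall>i<n. p i > 0" using p by auto
  define g where "g y = ennreal \<bar>f y * indic_ball n r y\<bar>" for y
  have gm[measurable]: "g \<in> borel_measurable (Rn n)" unfolding g_def by measurable
  have "mixnorm n p (\<lambda>x. hardy n f x * indic_ball n r x)
      = mixE p n (\<lambda>x. ennreal \<bar>hardy n f x * indic_ball n r x\<bar>) (\<lambda>_. undefined)"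
    by (simp add: mixnorm_def mixpart_mixE)
  also have "\<dots> \<le> mixE p n (\<lambda>x. \<integral>\<^sup>+s. ennreal (wt n 1 s) * g (dil n s x) \<partial>Rn n) (\<lambda>_. undefined)"
    by (rule mixE_mono_AE) (use p0 hardy_dom[OF n fm] in \<open>auto simp: undef_space g_def\<close>)
  also have "\<dots> \<le> (\<Prod>i<n. ennreal (1 powr (1 / p i)) * cq (p i)) * mixE p n g (\<lambda>_. undefined)"
    by (rule op_bound[OF p]) auto
  also have "(\<Prod>i<n. ennreal (1 powr (1 / p i)) * cq (p i)) = (\<Prod>i<n. cq (p i))" by simp
  also have "mixE p n g (\<lambda>_. undefined) = mixnorm n p (\<lambda>x. f x * indic_ball n r x)"
    by (simp add: mixnorm_def mixpart_mixE g_def[abs_def])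
  finally show ?thesis .
qed

lemma morrey_transfer:
  assumes key: "\<And>r. r > 0 \<Longrightarrow> mixnorm n p (\<lambda>x. T x * indic_ball n r x) \<le> C * mixnorm n p (\<lambda>x. f x * indic_ball n r x)"
  shows "morrey_norm n p lam T \<le> C * morrey_norm n p lam f"
  unfolding morrey_norm_def
proof (rule SUP_least)
  fix r :: real assume r: "r \<in> {0<..}"
  define K where "K = ennreal (1 / (measure (Rn n) (ball0 n r) powr lam * enn2real (mixnorm n p (indic_ball n r))))"
  have "mixnorm n p (\<lambda>x. T x * indic_ball n r x) * K \<le> (C * mixnorm n p (\<lambda>x. f x * indic_ball n r x)) * K"
    using key r by (intro mult_right_mono) auto
  also have "\<dots> = C * (mixnorm n p (\<lambda>x. f x * indic_ball n r x) * K)" by (simp add: mult.assoc)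
  also have "\<dots> \<le> C * (SUP r\<in>{0<..}. mixnorm n p (\<lambda>x. f x * indic_ball n r x)
        * ennreal (1 / (measure (Rn n) (ball0 n r) powr lam * enn2real (mixnorm n p (indic_ball n r)))))"
    unfolding K_def by (intro mult_left_mono SUP_upper r) auto
  finally show "mixnorm n p (\<lambda>x. T x * indic_ball n r x) * ennreal (1 / (measure (Rn n) (ball0 n r) powr lam * enn2real (mixnorm n p (indic_ball n r))))
      \<le> C * (SUP r\<in>{0<..}. mixnorm n p (\<lambda>x. f x * indic_ball n r x)
        * ennreal (1 / (measure (Rn n) (ball0 n r) powr lam * enn2real (mixnorm n p (indic_ball n r)))))"
    unfolding K_def .
qed

lemma part_a:
  assumes n: "n \<ge> 1" and p: "\<forall>i<n. p i > 1"
  shows "bounded_op (hardy n) (morrey_space n p lam) (morrey_norm n p lam) (morrey_norm n p lam)"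
  unfolding bounded_op_def
proof (intro exI ballI)
  fix f assume "f \<in> morrey_space n p lam"
  then have fm: "f \<in> borel_measurable (Rn n)" by (simp add: morrey_space_def)
  show "morrey_norm n p lam (hardy n f) \<le> ennreal (\<Prod>i<n. enn2real (cq (p i))) * morrey_norm n p lam f"
    unfolding cq_prod_real[OF p, symmetric]
    by (rule morrey_transfer) (rule hardy_local_bound[OF n p fm])
qed

lemma mix_countable_subadd:
  assumes p: "\<forall>i<n. p i > 1" and Fm[measurable]: "\<And>k. F k \<in> borel_measurable (Rn n)"
  shows "mixE p n (\<lambda>y. \<Sum>k. F k y) (\<lambda>_. undefined) \<le> (\<Sum>k. mixE p n (F k) (\<lambda>_. undefined))"
proof -
  have sf: "sigma_finite_measure (count_space (UNIV :: nat set))"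
    by (rule sigma_finite_measure_count_space)
  have m: "(\<lambda>(y, k). F k y) \<in> borel_measurable (Rn n \<Otimes>\<^sub>M count_space UNIV)"
  proof -
    have "(\<lambda>w. F (snd w) (fst w)) \<in> borel_measurable (Rn n \<Otimes>\<^sub>M count_space UNIV)"
      by (rule measurable_compose_countable'[where I=UNIV]) auto
    then show ?thesis by (simp add: case_prod_beta')
  qed
  have "mixE p n (\<lambda>y. \<integral>\<^sup>+k. F k y \<partial>count_space UNIV) (\<lambda>_. undefined)
      \<le> (\<integral>\<^sup>+k. mixE p n (\<lambda>y. F k y) (\<lambda>_. undefined) \<partial>count_space UNIV)"
    by (rule mix_minkowski[OF p sf m]) (auto simp: undef_space)
  then show ?thesis by (simp add: nn_integral_count_space_nat)
qed

definition Sk :: "nat \<Rightarrow> real \<Rightarrow> nat \<Rightarrow> (nat \<Rightarrow> real) set" where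
  "Sk n R k = {t \<in> space (Rn n). (k = 0 \<or> 2 ^ k * R \<le> enorm n t) \<and> enorm n t < 2 ^ (k + 1) * R}"

lemma Sk_sets[measurable]: "Sk n R k \<in> sets (Rn n)"
proof -
  have "Sk n R k = {t \<in> space (Rn n). (k = 0 \<or> 2 ^ k * R \<le> enorm n t) \<and> enorm n t < 2 ^ (k + 1) * R}"
    by (simp add: Sk_def)
  also have "\<dots> \<in> sets (Rn n)" by measurable
  finally show ?thesis .
qed

lemma Sk_cover:
  assumes R: "R > 0" and t: "t \<in> space (Rn n)"
  shows "\<exists>k. t \<in> Sk n R k"
proof -
  have "\<exists>k. enorm n t < 2 ^ (k + 1) * R"
  proof -
    obtain k :: nat where "enorm n t / R < real k" using reals_Archimedean2 by blast
    moreover have "real k < 2 ^ k" by (rule of_nat_less_two_power)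
    moreover have "(2::real) ^ k \<le> 2 ^ (k + 1)" by simp
    ultimately have "enorm n t / R < 2 ^ (k + 1)" by linarith
    then show ?thesis using R by (auto simp: field_simps)
  qed
  then obtain k where k: "enorm n t < 2 ^ (k + 1) * R" by blast
  define k0 where "k0 = (LEAST k. enorm n t < 2 ^ (k + 1) * R)"
  have k0: "enorm n t < 2 ^ (k0 + 1) * R" unfolding k0_def by (rule LeastI[of _ k]) (rule k)
  have "k0 = 0 \<or> 2 ^ k0 * R \<le> enorm n t"
  proof (cases k0)
    case (Suc j)
    have "\<not> enorm n t < 2 ^ (j + 1) * R"
    proof
      assume "enorm n t < 2 ^ (j + 1) * R"
      then have "k0 \<le> j" unfolding k0_def by (rule Least_le)
      then show False using Suc by simp
    qed
    then show ?thesis using Suc by simp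
  qed simp
  then show ?thesis using k0 t unfolding Sk_def by blast
qed

lemma hardy_adj_dom:
  assumes n: "n \<ge> 1" and fm[measurable]: "f \<in> borel_measurable (Rn n)" and R: "R > 0"
    and x: "x \<in> space (Rn n)" and xnz: "\<forall>i<n. x i \<noteq> 0"
  shows "ennreal \<bar>hardy_adj n f x * indic_ball n R x\<bar>
     \<le> (\<Sum>k. \<integral>\<^sup>+s. ennreal (wt n (1 / 2 ^ k) s) * ennreal \<bar>f (dil n s x) * indic_ball n (2 ^ (k + 1) * R) (dil n s x)\<bar> \<partial>Rn n)"
proof (cases "x \<in> ball0 n R")
  case False then show ?thesis by (simp add: indic_ball_def)
next
  case True
  define \<rho> where "\<rho> = enorm n x"
  have \<rho>: "\<rho> > 0" "\<rho> < R" using enorm_pos[OF n xnz] True unfolding \<rho>_def by (auto simp: ball0_def)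
  define A where "A = {t \<in> space (Rn n). \<rho> \<le> enorm n t}"
  have As[measurable]: "A \<in> sets (Rn n)" unfolding A_def by measurable
  define v where "v t = \<bar>f t\<bar> * enorm n t powr (- real n)" for t
  have vm[measurable]: "v \<in> borel_measurable (Rn n)" unfolding v_def by measurable
  have v0: "v t \<ge> 0" for t unfolding v_def by simp
  define h where "h k t = ennreal (indicator (A \<inter> Sk n R k) t * v t)" for k t
  have hm[measurable]: "h k \<in> borel_measurable (Rn n)" for k unfolding h_def by measurable
  have "ennreal \<bar>hardy_adj n f x * indic_ball n R x\<bar> = ennreal \<bar>LINT t:A|Rn n. f t * enorm n t powr (- real n)\<bar>"
    using True unfolding hardy_adj_def A_def \<rho>_def by (simp add: indic_ball_def)
  also have "\<dots> \<le> (\<integral>\<^sup>+t. ennreal (indicator A t * v t) \<partial>Rn n)"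
    using set_integral_bound[where A=A and M="Rn n" and g="\<lambda>t. f t * enorm n t powr (- real n)"]
    by (simp add: v_def abs_mult)
  also have "\<dots> \<le> (\<integral>\<^sup>+t. (\<Sum>k. h k t) \<partial>Rn n)"
  proof (rule nn_integral_mono)
    fix t assume ts: "t \<in> space (Rn n)"
    show "ennreal (indicator A t * v t) \<le> (\<Sum>k. h k t)"
    proof (cases "t \<in> A")
      case False then show ?thesis by simp
    next
      case tA: True
      obtain k where k: "t \<in> Sk n R k" using Sk_cover[OF R ts] by blast
      have "ennreal (indicator A t * v t) = h k t" using tA k by (simp add: h_def)
      also have "h k t \<le> (\<Sum>k. h k t)" using sum_le_suminf[of "\<lambda>k. h k t" "{k}"] by (simp add: summableI)
      finally show ?thesis .
    qed
  qed
  also have "\<dots> = (\<Sum>k. \<integral>\<^sup>+t. h k t \<partial>Rn n)"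
    by (rule nn_integral_suminf) measurable
  also have "\<dots> \<le> (\<Sum>k. \<integral>\<^sup>+s. ennreal (wt n (1 / 2 ^ k) s) * ennreal \<bar>f (dil n s x) * indic_ball n (2 ^ (k + 1) * R) (dil n s x)\<bar> \<partial>Rn n)"
  proof (rule suminf_le[OF _ summableI summableI])
    fix k :: nat
    have "(\<integral>\<^sup>+t. h k t \<partial>Rn n) = ennreal (\<Prod>i<n. \<bar>x i\<bar>) * (\<integral>\<^sup>+s. h k (dil n x s) \<partial>Rn n)"
      by (rule change_of_vars_x[OF xnz hm])
    also have "\<dots> = (\<integral>\<^sup>+s. ennreal (\<Prod>i<n. \<bar>x i\<bar>) * h k (dil n x s) \<partial>Rn n)"
      by (rule nn_integral_cmult[symmetric]) measurable
    also have "\<dots> \<le> (\<integral>\<^sup>+s. ennreal (wt n (1 / 2 ^ k) s) * ennreal \<bar>f (dil n s x) * indic_ball n (2 ^ (k + 1) * R) (dil n s x)\<bar> \<partial>Rn n)"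
    proof (rule nn_integral_mono_AE)
      show "AE s in Rn n. ennreal (\<Prod>i<n. \<bar>x i\<bar>) * h k (dil n x s)
          \<le> ennreal (wt n (1 / 2 ^ k) s) * ennreal \<bar>f (dil n s x) * indic_ball n (2 ^ (k + 1) * R) (dil n s x)\<bar>"
        using AE_nonzero AE_space
      proof eventually_elim
        case (elim s)
        have dc: "dil n x s = dil n s x" using dil_comm[OF x elim(2)] .
        define t where "t = dil n s x"
        have ts: "t \<in> space (Rn n)" unfolding t_def using dil_space[OF x] .
        show ?case
        proof (cases "t \<in> A \<inter> Sk n R k")
          case False
          then show ?thesis by (simp add: h_def dc t_def[symmetric])
        next
          case tA: True
          have tn: "enorm n t \<ge> \<rho>" using tA unfolding A_def by simp
          have tpos: "enorm n t > 0" using tn \<rho> by simp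
          have tball: "t \<in> ball0 n (2 ^ (k + 1) * R)" using tA ts unfolding Sk_def ball0_def by auto
          have le: "(\<Prod>i<n. \<bar>x i\<bar> / enorm n t) \<le> wt n (1 / 2 ^ k) s"
            unfolding wt_def
          proof (rule prod_mono)
            fix i assume "i \<in> {..<n}"
            then have i: "i < n" by simp
            have xi: "\<bar>x i\<bar> \<le> \<rho>" unfolding \<rho>_def by (rule enorm_ge_comp[OF i])
            have a: "\<bar>x i\<bar> / enorm n t \<le> 1 / 2 ^ k"
            proof (cases "k = 0")
              case True
              then show ?thesis using xi tn tpos by (simp add: field_simps)
            next
              case False
              then have "2 ^ k * R \<le> enorm n t" using tA unfolding Sk_def by simp
              moreover have "2 ^ k * \<bar>x i\<bar> \<le> 2 ^ k * R" using xi \<rho> by simp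
              ultimately have "2 ^ k * \<bar>x i\<bar> \<le> enorm n t" by linarith
              then show ?thesis using tpos by (simp add: field_simps)
            qed
            have "\<bar>s i\<bar> * \<bar>x i\<bar> = \<bar>t i\<bar>" using i unfolding t_def dil_def by (simp add: abs_mult)
            also have "\<dots> \<le> enorm n t" by (rule enorm_ge_comp[OF i])
            finally have "\<bar>s i\<bar> * \<bar>x i\<bar> \<le> enorm n t" .
            then have b: "\<bar>x i\<bar> / enorm n t \<le> 1 / \<bar>s i\<bar>" using tpos elim(1) i
              by (simp add: field_simps)
            show "0 \<le> \<bar>x i\<bar> / enorm n t \<and> \<bar>x i\<bar> / enorm n t \<le> min (1 / 2 ^ k) (1 / \<bar>s i\<bar>)"
              using a b tpos by simp
          qed
          have "(\<Prod>i<n. \<bar>x i\<bar>) * v t = (\<Prod>i<n. \<bar>x i\<bar> / enorm n t) * \<bar>f t\<bar>"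
            using powr_prod_ratio[OF tpos, of n x] unfolding v_def by (simp add: mult_ac)
          then have "ennreal (\<Prod>i<n. \<bar>x i\<bar>) * h k (dil n x s) = ennreal (\<Prod>i<n. \<bar>x i\<bar> / enorm n t) * ennreal \<bar>f t\<bar>"
          proof -
            have pn: "0 \<le> (\<Prod>i<n. \<bar>x i\<bar> / enorm n t)" by (intro prod_nonneg) (use tpos in auto)
            have "ennreal (\<Prod>i<n. \<bar>x i\<bar>) * h k (dil n x s) = ennreal ((\<Prod>i<n. \<bar>x i\<bar>) * v t)"
              using tA v0[of t] by (simp add: h_def dc t_def[symmetric] ennreal_mult'[symmetric] prod_nonneg)
            also have "\<dots> = ennreal (\<Prod>i<n. \<bar>x i\<bar> / enorm n t) * ennreal \<bar>f t\<bar>"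
              using \<open>(\<Prod>i<n. \<bar>x i\<bar>) * v t = _\<close> pn by (simp add: ennreal_mult')
            finally show ?thesis .
          qed
          also have "\<dots> \<le> ennreal (wt n (1 / 2 ^ k) s) * ennreal \<bar>f t\<bar>"
            by (intro mult_right_mono ennreal_leI le) auto
          also have "\<dots> = ennreal (wt n (1 / 2 ^ k) s) * ennreal \<bar>f (dil n s x) * indic_ball n (2 ^ (k + 1) * R) (dil n s x)\<bar>"
            using tball by (simp add: t_def[symmetric] indic_ball_def)
          finally show ?thesis .
        qed
      qed
    qed
    finally show "(\<integral>\<^sup>+t. h k t \<partial>Rn n) \<le> (\<integral>\<^sup>+s. ennreal (wt n (1 / 2 ^ k) s) * ennreal \<bar>f (dil n s x) * indic_ball n (2 ^ (k + 1) * R) (dil n s x)\<bar> \<partial>Rn n)" .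
  qed
  finally show ?thesis .
qed

lemma W_meas[measurable]:
  assumes [measurable]: "g \<in> borel_measurable (Rn n)"
  shows "(\<lambda>x. \<integral>\<^sup>+s. ennreal (wt n e s) * g (dil n s x) \<partial>Rn n) \<in> borel_measurable (Rn n)"
proof -
  interpret S: sigma_finite_measure "Rn n" by (rule sf_Rn)
  have "(\<lambda>w. ennreal (wt n e (snd w)) * g (dil n (snd w) (fst w))) \<in> borel_measurable (Rn n \<Otimes>\<^sub>M Rn n)"
  proof -
    have "(\<lambda>w. g (dil n (snd w) (fst w))) \<in> borel_measurable (Rn n \<Otimes>\<^sub>M Rn n)"
      by (rule measurable_compose[OF dil2_meas]) measurable
    then show ?thesis by measurable
  qed
  then have "(\<lambda>(x, s). ennreal (wt n e s) * g (dil n s x)) \<in> borel_measurable (Rn n \<Otimes>\<^sub>M Rn n)"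
    by (simp add: case_prod_beta')
  then show ?thesis by (rule S.borel_measurable_nn_integral)
qed

lemma prod_half_powr:
  "(\<Prod>i<n. ((1::real) / 2 ^ k) powr (1 / q i)) = (1 / 2 ^ k) powr sig n q"
  unfolding sig_def by (simp add: powr_sum)

lemma hardy_adj_local_bound:
  assumes n: "n \<ge> 1" and q: "\<forall>i<n. q i > 1" and fm[measurable]: "f \<in> borel_measurable (Rn n)" and R: "R > 0"
  shows "mixnorm n q (\<lambda>x. hardy_adj n f x * indic_ball n R x)
     \<le> (\<Sum>k. ennreal ((1 / 2 ^ k) powr sig n q) * (\<Prod>i<n. cq (q i)) * mixnorm n q (\<lambda>x. f x * indic_ball n (2 ^ (k + 1) * R) x))"
proof -
  have q0: "\<forall>i<n. q i > 0" using q by auto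
  define g where "g k y = ennreal \<bar>f y * indic_ball n (2 ^ (k + 1) * R) y\<bar>" for k y
  have gm[measurable]: "g k \<in> borel_measurable (Rn n)" for k unfolding g_def by measurable
  define W where "W k x = (\<integral>\<^sup>+s. ennreal (wt n (1 / 2 ^ k) s) * g k (dil n s x) \<partial>Rn n)" for k x
  have Wm[measurable]: "W k \<in> borel_measurable (Rn n)" for k unfolding W_def by (rule W_meas) (rule gm)
  have "mixnorm n q (\<lambda>x. hardy_adj n f x * indic_ball n R x)
      = mixE q n (\<lambda>x. ennreal \<bar>hardy_adj n f x * indic_ball n R x\<bar>) (\<lambda>_. undefined)"
    by (simp add: mixnorm_def mixpart_mixE)
  also have "\<dots> \<le> mixE q n (\<lambda>x. \<Sum>k. W k x) (\<lambda>_. undefined)"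
    by (rule mixE_mono_AE) (use q0 hardy_adj_dom[OF n fm R] in \<open>auto simp: undef_space W_def g_def\<close>)
  also have "\<dots> \<le> (\<Sum>k. mixE q n (W k) (\<lambda>_. undefined))"
    by (rule mix_countable_subadd[OF q Wm])
  also have "\<dots> \<le> (\<Sum>k. ennreal ((1 / 2 ^ k) powr sig n q) * (\<Prod>i<n. cq (q i)) * mixnorm n q (\<lambda>x. f x * indic_ball n (2 ^ (k + 1) * R) x))"
  proof (rule suminf_le[OF _ summableI summableI])
    fix k :: nat
    have "mixE q n (W k) (\<lambda>_. undefined) \<le> (\<Prod>i<n. ennreal ((1 / 2 ^ k) powr (1 / q i)) * cq (q i)) * mixE q n (g k) (\<lambda>_. undefined)"
      unfolding W_def[abs_def] by (rule op_bound[OF q]) auto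
    also have "(\<Prod>i<n. ennreal ((1 / 2 ^ k) powr (1 / q i)) * cq (q i)) = ennreal ((1 / 2 ^ k) powr sig n q) * (\<Prod>i<n. cq (q i))"
      by (simp add: prod.distrib prod_ennreal prod_half_powr)
    also have "mixE q n (g k) (\<lambda>_. undefined) = mixnorm n q (\<lambda>x. f x * indic_ball n (2 ^ (k + 1) * R) x)"
      by (simp add: mixnorm_def mixpart_mixE g_def[abs_def])
    finally show "mixE q n (W k) (\<lambda>_. undefined) \<le> ennreal ((1 / 2 ^ k) powr sig n q) * (\<Prod>i<n. cq (q i)) * mixnorm n q (\<lambda>x. f x * indic_ball n (2 ^ (k + 1) * R) x)" .
  qed
  finally show ?thesis .
qed

definition Dm :: "nat \<Rightarrow> (nat \<Rightarrow> real) \<Rightarrow> real \<Rightarrow> real \<Rightarrow> real" where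
  "Dm n q lam r = measure (Rn n) (ball0 n r) powr lam * enn2real (mixnorm n q (indic_ball n r))"

lemma Dm_nonneg: "Dm n q lam r \<ge> 0"
  unfolding Dm_def by simp

lemma Dm_scale:
  assumes q: "\<forall>i<n. q i > 0"
  shows "Dm n q lam (2 * r) = 2 powr (real n * lam + sig n q) * Dm n q lam r"
proof -
  have "measure (Rn n) (ball0 n (2 * r)) powr lam = (2 ^ n) powr lam * measure (Rn n) (ball0 n r) powr lam"
    unfolding ball_measure_scale by (simp add: powr_mult)
  also have "(2::real) ^ n = 2 powr real n" by (simp add: powr_realpow)
  also have "(2 powr real n) powr lam = 2 powr (real n * lam)" by (simp add: powr_powr)
  finally have m: "measure (Rn n) (ball0 n (2 * r)) powr lam = 2 powr (real n * lam) * measure (Rn n) (ball0 n r) powr lam" .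
  have e: "enn2real (mixnorm n q (indic_ball n (2 * r))) = 2 powr sig n q * enn2real (mixnorm n q (indic_ball n r))"
    unfolding mix_ball_scale[OF q] by (simp add: enn2real_mult)
  show ?thesis unfolding Dm_def m e by (simp add: powr_add mult_ac)
qed

lemma Dm_iter:
  assumes q: "\<forall>i<n. q i > 0"
  shows "Dm n q lam (2 ^ k * R) = (2 powr (real n * lam + sig n q)) ^ k * Dm n q lam R"
proof (induction k)
  case (Suc k)
  have "Dm n q lam (2 ^ Suc k * R) = Dm n q lam (2 * (2 ^ k * R))" by (simp add: mult.assoc)
  also have "\<dots> = 2 powr (real n * lam + sig n q) * Dm n q lam (2 ^ k * R)" by (rule Dm_scale[OF q])
  finally show ?case using Suc by simp
qed simp

lemma morrey_local:
  assumes D: "Dm n q lam r > 0" and r: "r > 0"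
  shows "mixnorm n q (\<lambda>x. f x * indic_ball n r x) \<le> morrey_norm n q lam f * ennreal (Dm n q lam r)"
proof -
  have "mixnorm n q (\<lambda>x. f x * indic_ball n r x) * ennreal (1 / Dm n q lam r) \<le> morrey_norm n q lam f"
    unfolding morrey_norm_def Dm_def using r by (intro SUP_upper2[of r]) auto
  then have "mixnorm n q (\<lambda>x. f x * indic_ball n r x) * ennreal (1 / Dm n q lam r) * ennreal (Dm n q lam r) \<le> morrey_norm n q lam f * ennreal (Dm n q lam r)"
    by (rule mult_right_mono) simp
  also have "mixnorm n q (\<lambda>x. f x * indic_ball n r x) * ennreal (1 / Dm n q lam r) * ennreal (Dm n q lam r) = mixnorm n q (\<lambda>x. f x * indic_ball n r x)"
    using D by (simp add: mult.assoc ennreal_mult'[symmetric])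
  finally show ?thesis .
qed

lemma pow2_powr: "(2 powr t) ^ k = 2 powr (real k * t)"
  by (induction k) (simp_all add: powr_add[symmetric] algebra_simps)

lemma coef_identity:
  "((1::real) / 2 ^ k) powr s * (2 powr (m + s)) ^ (k + 1) = 2 powr (m + s) * (2 powr m) ^ k"
proof -
  have "(1::real) / 2 ^ k = 2 powr (- real k)" by (simp add: powr_minus powr_realpow divide_inverse)
  then have c: "((1::real) / 2 ^ k) powr s = 2 powr (- real k * s)" by (simp add: powr_powr)
  have "((1::real) / 2 ^ k) powr s * (2 powr (m + s)) ^ (k + 1)
      = 2 powr (m + s) * (2 powr (- real k * s) * (2 powr (m + s)) ^ k)"
    unfolding c by (simp add: mult_ac)
  also have "2 powr (- real k * s) * (2 powr (m + s)) ^ k = (2 powr m) ^ k"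
    unfolding pow2_powr by (simp add: powr_add[symmetric] algebra_simps)
  finally show ?thesis .
qed

lemma part_b:
  assumes n: "n \<ge> 1" and q: "\<forall>i<n. q i > 1" and lam: "lam < 0"
  shows "bounded_op (hardy_adj n) (morrey_space n q lam) (morrey_norm n q lam) (morrey_norm n q lam)"
  unfolding bounded_op_def
proof (intro exI ballI)
  fix f assume "f \<in> morrey_space n q lam"
  then have fm[measurable]: "f \<in> borel_measurable (Rn n)" by (simp add: morrey_space_def)
  have q0: "\<forall>i<n. q i > 0" using q by auto
  define \<sigma> where "\<sigma> = sig n q"
  define a where "a = (2::real) powr (real n * lam + \<sigma>)"
  define b where "b = (2::real) powr (real n * lam)"
  define Cq where "Cq = (\<Prod>i<n. enn2real (cq (q i)))"
  define M where "M = morrey_norm n q lam f"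
  have a0: "a > 0" unfolding a_def by simp
  have b0: "b > 0" unfolding b_def by simp
  have b1: "b < 1"
  proof -
    have "real n * lam < 0" using n lam by (simp add: mult_pos_neg)
    then have "b < 2 powr 0" unfolding b_def by (intro powr_less_mono) auto
    then show ?thesis by simp
  qed
  have Cq0: "Cq \<ge> 0" unfolding Cq_def by (intro prod_nonneg) auto
  have CqE: "(\<Prod>i<n. cq (q i)) = ennreal Cq" unfolding Cq_def by (rule cq_prod_real[OF q])
  have geo: "(\<Sum>k. ennreal (a * b ^ k)) = ennreal (a / (1 - b))"
  proof -
    have "(\<Sum>k. ennreal (a * b ^ k)) = ennreal (\<Sum>k. a * b ^ k)"
      by (rule suminf_ennreal2) (use a0 b0 b1 in \<open>auto intro!: summable_mult\<close>)
    also have "(\<Sum>k. a * b ^ k) = a * (1 / (1 - b))"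
      using b0 b1 by (subst suminf_mult) (auto simp: suminf_geometric)
    finally show ?thesis by simp
  qed
  show "morrey_norm n q lam (hardy_adj n f) \<le> ennreal (a / (1 - b) * Cq) * morrey_norm n q lam f"
    unfolding morrey_norm_def[of n q lam "hardy_adj n f"] M_def[symmetric]
  proof (rule SUP_least)
    fix R :: real assume "R \<in> {0<..}"
    then have R: "R > 0" by simp
    have Dfold: "measure (Rn n) (ball0 n R) powr lam * enn2real (mixnorm n q (indic_ball n R)) = Dm n q lam R"
      by (simp add: Dm_def)
    have main: "mixnorm n q (\<lambda>x. hardy_adj n f x * indic_ball n R x) * ennreal (1 / Dm n q lam R)
        \<le> ennreal (a / (1 - b) * Cq) * M"
    proof (cases "Dm n q lam R > 0")
      case False
      then have "Dm n q lam R = 0" using Dm_nonneg[of n q lam R] by simp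
      then show ?thesis by simp
    next
      case True
      define D where "D = Dm n q lam R"
      have D0: "D > 0" using True D_def by simp
      define N where "N k = mixnorm n q (\<lambda>x. f x * indic_ball n (2 ^ (k + 1) * R) x)" for k
      have Nk: "N k \<le> M * ennreal (a ^ (k + 1) * D)" for k
      proof -
        have "Dm n q lam (2 ^ (k + 1) * R) = a ^ (k + 1) * D"
          unfolding D_def a_def \<sigma>_def by (rule Dm_iter[OF q0])
        moreover have "a ^ (k + 1) * D > 0" using a0 D0 by simp
        ultimately show ?thesis unfolding N_def M_def
          by (metis morrey_local R zero_less_numeral zero_less_power mult_pos_pos)
      qed
      have "mixnorm n q (\<lambda>x. hardy_adj n f x * indic_ball n R x) * ennreal (1 / D)
          \<le> (\<Sum>k. ennreal ((1 / 2 ^ k) powr \<sigma>) * ennreal Cq * N k) * ennreal (1 / D)"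
        unfolding N_def \<sigma>_def CqE[symmetric]
        by (intro mult_right_mono hardy_adj_local_bound[OF n q fm R]) auto
      also have "\<dots> = (\<Sum>k. ennreal ((1 / 2 ^ k) powr \<sigma>) * ennreal Cq * N k * ennreal (1 / D))"
        by simp
      also have "\<dots> \<le> (\<Sum>k. ennreal (a * b ^ k) * (ennreal Cq * M))"
      proof (rule suminf_le[OF _ summableI summableI])
        fix k :: nat
        have "ennreal ((1 / 2 ^ k) powr \<sigma>) * ennreal Cq * N k * ennreal (1 / D)
            \<le> ennreal ((1 / 2 ^ k) powr \<sigma>) * ennreal Cq * (M * ennreal (a ^ (k + 1) * D)) * ennreal (1 / D)"
          by (intro mult_right_mono mult_left_mono Nk) auto
        also have "\<dots> = ennreal ((1 / 2 ^ k) powr \<sigma> * (a ^ (k + 1) * D) * (1 / D)) * (ennreal Cq * M)"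
          using a0 D0 by (simp add: ennreal_mult'[symmetric] ennreal_mult''[symmetric] mult_ac)
        also have "(1 / 2 ^ k) powr \<sigma> * (a ^ (k + 1) * D) * (1 / D) = a * b ^ k"
          using D0 coef_identity[of k \<sigma> "real n * lam"] unfolding a_def b_def by simp
        finally show "ennreal ((1 / 2 ^ k) powr \<sigma>) * ennreal Cq * N k * ennreal (1 / D) \<le> ennreal (a * b ^ k) * (ennreal Cq * M)" .
      qed
      also have "\<dots> = ennreal (a / (1 - b)) * (ennreal Cq * M)"
        unfolding geo[symmetric] by simp
      also have "\<dots> = (ennreal (a / (1 - b)) * ennreal Cq) * M"
        by (simp add: mult.assoc)
      also have "ennreal (a / (1 - b)) * ennreal Cq = ennreal (a / (1 - b) * Cq)"
        by (rule ennreal_mult'[symmetric]) (use a0 b1 in simp)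
      finally show ?thesis unfolding D_def .
    qed
    then show "mixnorm n q (\<lambda>x. hardy_adj n f x * indic_ball n R x) *
        ennreal (1 / (measure (Rn n) (ball0 n R) powr lam * enn2real (mixnorm n q (indic_ball n R))))
        \<le> ennreal (a / (1 - b) * Cq) * M"
      unfolding Dfold .
  qed
qed

theorem theorem3p1:
  fixes n :: nat and p :: "nat \<Rightarrow> real" and lam :: real
  assumes "1 \<le> n"
    and "\<forall>i<n. 1 < p i"
    and "- (1 / real n) * (\<Sum>i<n. 1 / p i) < lam" and "lam < 0"
  shows "bounded_op (hardy n) (morrey_space n p lam) (morrey_norm n p lam) (morrey_norm n p lam)
     \<and> bounded_op (hardy_adj n) (morrey_space n (\<lambda>i. p i / (p i - 1)) lam)
           (morrey_norm n (\<lambda>i. p i / (p i - 1)) lam) (morrey_norm n (\<lambda>i. p i / (p i - 1)) lam)"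
proof
  show "bounded_op (hardy n) (morrey_space n p lam) (morrey_norm n p lam) (morrey_norm n p lam)"
    by (rule part_a) (use assms in auto)
  have q: "\<forall>i<n. 1 < p i / (p i - 1)" using assms(2) by (auto simp: field_simps)
  show "bounded_op (hardy_adj n) (morrey_space n (\<lambda>i. p i / (p i - 1)) lam)
           (morrey_norm n (\<lambda>i. p i / (p i - 1)) lam) (morrey_norm n (\<lambda>i. p i / (p i - 1)) lam)"
    by (rule part_b) (use assms q in auto)
qed

end
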